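(* In the Setting of the context (including the smoothness, bounded variance and bounded heterogeneity assumptions), run DAT-SGD with linear weights $\alpha_t=t$ and a learning rate $0<\eta\le\frac{\rho^2}{8\sqrt{80}\,L}$. Then for all $t\ge1$, \[ \Gamma_t\le\frac{2560\,\tilde\sigma^2\eta^2}{\rho^4},\qquad\text{where }\tilde\sigma^2=2\sigma^2+\zeta^2. \]
   Context: Setting. Let $M,d\ge1$ be integers. For each $i\in\{1,\dots,M\}$, $\mathcal{D}_i$ is a probability distribution, $f_i(\cdot,z):\mathbb{R}^d\to\mathbb{R}$ is differentiable for each sample $z$, and $f_i(x)=\mathbb{E}_{z\sim\mathcal{D}_i}[f_i(x,z)]$ is differentiable with $\mathbb{E}_{z\sim\mathcal{D}_i}[\nabla f_i(x,z)]=\nabla f_i(x)$ for all $x$. Let $f=\frac1M\sum_{i=1}^M f_i$. Standing assumptions: (smoothness) each $\nabla f_i$ is $L$-Lipschitz, with $L>0$; (bounded variance) $\mathbb{E}_{z\sim\mathcal{D}_i}\|\nabla f_i(x,z)-\nabla f_i(x)\|^2\le\sigma^2$ for all $x\in\mathbb{R}^d$, $i\in[M]$; (bounded heterogeneity) $\frac1M\sum_{i=1}^M\|\nabla f_i(x)-\nabla f(x)\|^2\le\zeta^2$ for all $x$. Gossip matrix: $P\in[0,1]^{M\times M}$ is symmetric with $P\mathbf{1}=\mathbf{1}$ (hence doubly stochastic); its (real) eigenvalues satisfy $1=\lambda_1>|\lambda_2|\ge\cdots\ge|\lambda_M|$, and the spectral gap is $\rho=1-|\lambda_2|\in(0,1]$.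 Algorithm DAT-SGD: inputs $w_1\in\mathbb{R}^d$, learning rate $\eta>0$, positive weights $(\alpha_t)_{t\ge1}$; let $\alpha_{1:t}=\sum_{s=1}^t\alpha_s$, $\alpha_{1:0}=0$, $\delta_t=\alpha_t/\alpha_{1:t}$. Initialize $w_1^i=x_1^i=w_1$ for all $i$. At each round $t=1,2,\dots$, every machine $i$ draws $z_t^i\sim\mathcal{D}_i$ independently of all other samples, sets $g_t^i=\nabla f_i(x_t^i,z_t^i)$, $w_{t+1/2}^i=w_t^i-\eta\alpha_t g_t^i$, $x_{t+1/2}^i=(1-\delta_t)x_t^i+\delta_t w_{t+1/2}^i$, and then $w_{t+1}^i=\sum_{j=1}^M P_{ij}w_{t+1/2}^j$, $x_{t+1}^i=\sum_{j=1}^M P_{ij}x_{t+1/2}^j$. Averages: $\bar x_t=\frac1M\sum_i x_t^i$, $\bar w_t=\frac1M\sum_i w_t^i$, $\bar g_t=\frac1M\sum_i g_t^i$. Consensus distances: $\Gamma_t=\frac1M\sum_{i=1}^M\mathbb{E}\|x_t^i-\bar x_t\|^2$, $\Xi_t=\frac1M\sum_{i=1}^M\mathbb{E}\|w_t^i-\bar w_t\|^2$, $\Psi_t=\frac1M\sum_{i=1}^M\mathbb{E}\|g_t^i-\bar g_t\|^2$. *)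

theory Defs
  imports "HOL-Probability.Probability" "Jordan_Normal_Form.Char_Poly"
begin

text \<open>Machines are indexed by 0..M-1 (0-based),
  P is the gossip matrix (a JNF matrix), gf i x z is the stochastic gradient
  of machine i at point x with sample z, zs i is the sample drawn by machine i
  in round t, alpha are the weights.\<close>

definition dat_step ::
  "nat \<Rightarrow> real mat \<Rightarrow> (nat \<Rightarrow> 'x::euclidean_space \<Rightarrow> 'z \<Rightarrow> 'x) \<Rightarrow> real \<Rightarrow> (nat \<Rightarrow> real)
   \<Rightarrow> nat \<Rightarrow> (nat \<Rightarrow> 'z) \<Rightarrow> (nat \<Rightarrow> 'x) \<times> (nat \<Rightarrow> 'x) \<Rightarrow> (nat \<Rightarrow> 'x) \<times> (nat \<Rightarrow> 'x)"
where
  "dat_step M P gf eta alpha t zs wx =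
     (let w = fst wx; x = snd wx;
          g = (\<lambda>i. gf i (x i) (zs i));
          wh = (\<lambda>i. w i - (eta * alpha t) *\<^sub>R g i);
          \<delta> = alpha t / (\<Sum>s=1..t. alpha s);
          xh = (\<lambda>i. (1 - \<delta>) *\<^sub>R x i + \<delta> *\<^sub>R wh i)
      in ((\<lambda>i. \<Sum>j<M. P $$ (i, j) *\<^sub>R wh j),
          (\<lambda>i. \<Sum>j<M. P $$ (i, j) *\<^sub>R xh j)))"

text \<open>dat_iter ... z t = (w_t, x_t) for t \<ge> 1, where z t i is the sample of
  machine i in round t.  (Index t = 0 is unused and equals the initialization.)\<close>

fun dat_iter ::
  "nat \<Rightarrow> real mat \<Rightarrow> (nat \<Rightarrow> 'x::euclidean_space \<Rightarrow> 'z \<Rightarrow> 'x) \<Rightarrow> real \<Rightarrow> (nat \<Rightarrow> real)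
   \<Rightarrow> 'x \<Rightarrow> (nat \<Rightarrow> nat \<Rightarrow> 'z) \<Rightarrow> nat \<Rightarrow> (nat \<Rightarrow> 'x) \<times> (nat \<Rightarrow> 'x)"
where
  "dat_iter M P gf eta alpha w1 z 0 = ((\<lambda>i. w1), (\<lambda>i. w1))"
| "dat_iter M P gf eta alpha w1 z (Suc t) =
     (if t = 0 then ((\<lambda>i. w1), (\<lambda>i. w1))
      else dat_step M P gf eta alpha t (z t) (dat_iter M P gf eta alpha w1 z t))"

definition consensus_x ::
  "'w measure \<Rightarrow> nat \<Rightarrow> real mat \<Rightarrow> (nat \<Rightarrow> 'x::euclidean_space \<Rightarrow> 'z \<Rightarrow> 'x) \<Rightarrow> real
   \<Rightarrow> (nat \<Rightarrow> real) \<Rightarrow> 'x \<Rightarrow> (nat \<Rightarrow> nat \<Rightarrow> 'w \<Rightarrow> 'z) \<Rightarrow> nat \<Rightarrow> ennreal"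
where
  "consensus_x S M P gf eta alpha w1 Z t =
     (\<integral>\<^sup>+ \<omega>. ennreal ((1 / real M) *
        (\<Sum>i<M. (norm (snd (dat_iter M P gf eta alpha w1 (\<lambda>s j. Z s j \<omega>) t) i
                     - (1 / real M) *\<^sub>R (\<Sum>j<M. snd (dat_iter M P gf eta alpha w1 (\<lambda>s j. Z s j \<omega>) t) j)))\<^sup>2)) \<partial>S)"

end

theory Submission
  imports Defs "Jordan_Normal_Form.Schur_Decomposition"
begin

no_notation vec_nth (infixl "$" 90)


definition mv :: "real mat \<Rightarrow> nat \<Rightarrow> (nat \<Rightarrow> real) \<Rightarrow> nat \<Rightarrow> real" where
  "mv P M y i = (\<Sum>j<M. P $$ (i,j) * y j)"

lemma mv_vec:
  assumes "P \<in> carrier_mat M M" "i < M"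
  shows "(P *\<^sub>v vec M y) $ i = mv P M y i"
  using assms unfolding mv_def
  by (auto simp: scalar_prod_def lessThan_atLeast0 intro!: sum.cong)

lemma prod_char_list: "(\<Prod>k<M. [:- lam k, 1:]) = (\<Prod>e\<leftarrow>map lam [0..<M]. [:- e, 1:])"
  by (induction M) auto

lemma eig_root:
  assumes P: "P \<in> carrier_mat M M" and cp: "char_poly P = (\<Prod>k<M. [:- lam k, 1:])"
    and i0: "i0 < M" "w i0 \<noteq> 0" and ev: "\<And>i. i < M \<Longrightarrow> mv P M w i = \<beta> * w i"
  shows "\<exists>k<M. \<beta> = lam k"
proof -
  have "eigenvector P (vec M w) \<beta>"
    unfolding eigenvector_def
  proof (intro conjI)
    show "vec M w \<in> carrier_vec (dim_row P)" using P by auto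
    show "vec M w \<noteq> 0\<^sub>v (dim_row P)"
    proof
      assume "vec M w = 0\<^sub>v (dim_row P)"
      hence "vec M w $ i0 = 0\<^sub>v (dim_row P) $ i0" by simp
      thus False using i0 P by simp
    qed
    show "P *\<^sub>v vec M w = \<beta> \<cdot>\<^sub>v vec M w"
      by (rule eq_vecI) (use P ev mv_vec[OF P] in auto)
  qed
  hence "eigenvalue P \<beta>" unfolding eigenvalue_def by blast
  hence "poly (char_poly P) \<beta> = 0" using eigenvalue_root_char_poly[OF P] by simp
  hence "(\<Prod>k<M. \<beta> - lam k) = 0" unfolding cp by (simp add: poly_prod)
  thus ?thesis by auto
qed

lemma backsub:
  assumes B: "B \<in> carrier_mat M M" and ut: "upper_triangular B"
    and a: "a \<in> carrier_vec M" and Ba: "B *\<^sub>v a = a"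
    and d: "\<And>k. 1 \<le> k \<Longrightarrow> k < M \<Longrightarrow> B $$ (k,k) \<noteq> (1::real)"
  shows "1 \<le> k \<Longrightarrow> k < M \<Longrightarrow> a $ k = (0::real)"
proof (induction "M - k" arbitrary: k rule: less_induct)
  case less
  have hi: "a $ j = 0" if "k < j" "j < M" for j
    using less.hyps[of j] that less.prems by auto
  have "(B *\<^sub>v a) $ k = (\<Sum>j\<in>{0..<M}. B $$ (k,j) * a $ j)"
    using B a less.prems by (auto simp: scalar_prod_def)
  also have "\<dots> = (\<Sum>j\<in>{0..<M}. if j = k then B $$ (k,k) * a $ k else 0)"
  proof (rule sum.cong)
    fix j assume j: "j \<in> {0..<M}"
    show "B $$ (k,j) * a $ j = (if j = k then B $$ (k,k) * a $ k else 0)"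
    proof (cases "j < k")
      case True thus ?thesis using ut B less.prems unfolding upper_triangular_def by auto
    next
      case False thus ?thesis using hi[of j] j by auto
    qed
  qed simp
  also have "\<dots> = B $$ (k,k) * a $ k" using less.prems by simp
  finally have "B $$ (k,k) * a $ k = a $ k" using Ba by simp
  hence "(B $$ (k,k) - 1) * a $ k = 0" by (simp add: algebra_simps)
  thus ?case using d[OF less.prems] by simp
qed

lemma fixvec_const:
  assumes P: "(P :: real mat) \<in> carrier_mat M M" and cp: "char_poly P = (\<Prod>k<M. [:- lam k, 1:])"
    and lamne: "\<And>k. 1 \<le> k \<Longrightarrow> k < M \<Longrightarrow> lam k \<noteq> 1"
  shows "\<exists>q. q \<in> carrier_vec M \<and> (\<forall>c. c \<in> carrier_vec M \<longrightarrow> P *\<^sub>v c = c \<longrightarrow> (\<exists>\<alpha>. c = \<alpha> \<cdot>\<^sub>v q))"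
proof -
  obtain B W W' where sch: "schur_decomposition P (map lam [0..<M]) = (B,W,W')"
    by (metis prod_cases3)
  have cp': "char_poly P = (\<Prod>e\<leftarrow>map lam [0..<M]. [:- e, 1:])" using cp prod_char_list by metis
  from schur_decomposition[OF P cp' sch]
  have sim: "similar_mat_wit P B W W'" and ut: "upper_triangular B" and dg: "diag_mat B = map lam [0..<M]"
    by auto
  note D = similar_mat_witD2[OF P sim]
  have B: "B \<in> carrier_mat M M" and W: "W \<in> carrier_mat M M" and W': "W' \<in> carrier_mat M M"
    using D by auto
  have Bkk: "B $$ (k,k) = lam k" if "k < M" for k
  proof -
    have "diag_mat B ! k = map lam [0..<M] ! k" using dg by simp
    thus ?thesis using that B unfolding diag_mat_def by simp
  qed
  define q where "q = W *\<^sub>v unit_vec M 0"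
  have q: "q \<in> carrier_vec M" using W unfolding q_def by auto
  have "\<exists>\<alpha>. c = \<alpha> \<cdot>\<^sub>v q" if c: "c \<in> carrier_vec M" and Pc: "P *\<^sub>v c = c" for c
  proof -
    define a where "a = W' *\<^sub>v c"
    have a: "a \<in> carrier_vec M" using W' c unfolding a_def by auto
    have Wa: "W *\<^sub>v a = c"
      unfolding a_def using W W' c D(1) by (metis assoc_mult_mat_vec one_mult_mat_vec)
    have "B *\<^sub>v a = W' *\<^sub>v (P *\<^sub>v (W *\<^sub>v a))"
    proof -
      have "W' * P * W = B"
      proof -
        have "W' * P * W = W' * (W * B * W') * W" using D(3) by simp
        also have "\<dots> = (W' * W) * B * (W' * W)"
          using W W' B by (simp add: assoc_mult_mat[of _ M M _ M _ M])
        also have "\<dots> = B" using D(2) B by simp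
        finally show ?thesis .
      qed
      hence "B *\<^sub>v a = (W' * P * W) *\<^sub>v a" by simp
      also have "\<dots> = W' *\<^sub>v (P *\<^sub>v (W *\<^sub>v a))"
      proof -
        have "(W' * P * W) *\<^sub>v a = (W' * P) *\<^sub>v (W *\<^sub>v a)"
          by (rule assoc_mult_mat_vec) (use W W' P a in auto)
        also have "\<dots> = W' *\<^sub>v (P *\<^sub>v (W *\<^sub>v a))"
          by (rule assoc_mult_mat_vec) (use W W' P a in auto)
        finally show ?thesis .
      qed
      finally show ?thesis .
    qed
    hence Ba: "B *\<^sub>v a = a" using Wa Pc unfolding a_def by simp
    have az: "a $ k = 0" if "1 \<le> k" "k < M" for k
      by (rule backsub[OF B ut a Ba _ that]) (use Bkk lamne in auto)
    have "a = (a $ 0) \<cdot>\<^sub>v unit_vec M 0"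
      by (rule eq_vecI) (use a az in \<open>auto simp: unit_vec_def\<close>)
    hence "c = W *\<^sub>v ((a $ 0) \<cdot>\<^sub>v unit_vec M 0)" using Wa by simp
    also have "\<dots> = (a $ 0) \<cdot>\<^sub>v q" unfolding q_def using W by (simp add: mult_mat_vec)
    finally show ?thesis by blast
  qed
  thus ?thesis using q by blast
qed

lemma mult1:
  assumes P: "P \<in> carrier_mat M M" and cp: "char_poly P = (\<Prod>k<M. [:- lam k, 1:])"
    and lamne: "\<And>k. 1 \<le> k \<Longrightarrow> k < M \<Longrightarrow> lam k \<noteq> 1"
    and rows: "\<And>i. i < M \<Longrightarrow> mv P M (\<lambda>_. 1) i = 1"
    and sumw: "(\<Sum>i<M. w i) = 0" and ev: "\<And>i. i < M \<Longrightarrow> mv P M w i = w i"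
    and i: "i < M"
  shows "w i = 0"
proof -
  obtain q where q: "q \<in> carrier_vec M" and Q: "\<And>c. c \<in> carrier_vec M \<Longrightarrow> P *\<^sub>v c = c \<Longrightarrow> \<exists>\<alpha>. c = \<alpha> \<cdot>\<^sub>v q"
    using fixvec_const[OF P cp lamne] by blast
  have "P *\<^sub>v vec M w = vec M w" by (rule eq_vecI) (use P ev mv_vec[OF P] in auto)
  then obtain \<alpha> where a: "vec M w = \<alpha> \<cdot>\<^sub>v q" using Q vec_carrier by blast
  have "P *\<^sub>v vec M (\<lambda>_. 1) = vec M (\<lambda>_. 1)" by (rule eq_vecI) (use P rows mv_vec[OF P] in auto)
  then obtain \<beta> where b: "vec M (\<lambda>_. 1) = \<beta> \<cdot>\<^sub>v q" using Q vec_carrier by blast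
  have wj: "w j = \<alpha> * q $ j" and oj: "1 = \<beta> * q $ j" if "j < M" for j
    using arg_cong[OF a, of "\<lambda>v. v $ j"] arg_cong[OF b, of "\<lambda>v. v $ j"] that q by auto
  have wc: "w j = \<alpha> / \<beta>" if "j < M" for j
    using wj[OF that] oj[OF that] by (metis mult.commute mult.left_neutral mult_zero_left nonzero_mult_div_cancel_left times_divide_eq_right zero_neq_one)
  have "(\<Sum>j<M. w j) = real M * (\<alpha> / \<beta>)" using wc by simp
  hence "\<alpha> / \<beta> = 0" using sumw i by simp
  thus ?thesis using wc[OF i] by simp
qed



lemma quad0:
  fixes A C :: real
  assumes "\<And>s. 2 * s * A + s\<^sup>2 * C \<le> 0"
  shows "A = 0"
proof (rule ccontr)
  assume A: "A \<noteq> 0"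
  define d where "d = \<bar>C\<bar> + 1"
  define s where "s = A / d"
  have d: "d > 0" unfolding d_def by simp
  have e: "2 * s * A + s\<^sup>2 * C = A\<^sup>2 / d\<^sup>2 * (2 * d + C)"
    unfolding s_def using d by (simp add: field_simps power2_eq_square)
  have p: "A\<^sup>2 / d\<^sup>2 * (2 * d + C) > 0"
  proof (rule mult_pos_pos)
    show "A\<^sup>2 / d\<^sup>2 > 0" using A d by simp
    show "2 * d + C > 0" unfolding d_def by (auto simp: abs_if)
  qed
  have "2 * s * A + s\<^sup>2 * C > 0" unfolding e by (rule p)
  thus False using assms[of s] by simp
qed

lemma cont_coord [continuous_intros]: "continuous_on S (\<lambda>x::nat \<Rightarrow> real. x i)"
  by (rule continuous_on_subset[OF continuous_on_product_coordinates]) auto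

lemma compact_box: "compact (PiE UNIV (\<lambda>_::nat. {-1..1::real}))"
proof -
  have "compactin (product_topology (\<lambda>_::nat. euclidean) UNIV) (PiE UNIV (\<lambda>_. {-1..1::real}))"
    by (simp add: compactin_PiE)
  thus ?thesis unfolding euclidean_product_topology by simp
qed

lemma mv_lin: "mv P M (\<lambda>j. a j + s * b j) i = mv P M a i + s * mv P M b i"
  unfolding mv_def by (simp add: algebra_simps sum.distrib sum_distrib_left)

lemma mv_scale: "mv P M (\<lambda>j. s * b j) i = s * mv P M b i"
  unfolding mv_def by (simp add: algebra_simps sum_distrib_left)

lemma sum_mv:
  assumes cols: "\<And>j. j < M \<Longrightarrow> (\<Sum>i<M. P $$ (i,j)) = 1"
  shows "(\<Sum>i<M. mv P M y i) = (\<Sum>j<M. y j)"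
proof -
  have "(\<Sum>i<M. mv P M y i) = (\<Sum>j<M. (\<Sum>i<M. P $$ (i,j)) * y j)"
    unfolding mv_def by (subst sum.swap) (simp add: sum_distrib_right)
  also have "\<dots> = (\<Sum>j<M. y j)" using cols by simp
  finally show ?thesis .
qed

lemma mv_sym_ip:
  assumes sym: "\<And>i j. i < M \<Longrightarrow> j < M \<Longrightarrow> P $$ (i,j) = P $$ (j,i)"
  shows "(\<Sum>i<M. mv P M y i * mv P M z i) = (\<Sum>j<M. z j * mv P M (mv P M y) j)"
proof -
  have "(\<Sum>i<M. mv P M y i * mv P M z i) = (\<Sum>i<M. \<Sum>j<M. mv P M y i * P $$ (i,j) * z j)"
    unfolding mv_def[of P M z] by (simp add: sum_distrib_left mult.assoc)
  also have "\<dots> = (\<Sum>j<M. \<Sum>i<M. z j * (P $$ (j,i) * mv P M y i))"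
    by (subst sum.swap) (auto intro!: sum.cong simp: sym)
  also have "\<dots> = (\<Sum>j<M. z j * mv P M (mv P M y) j)"
    unfolding mv_def[of P M "mv P M y"] by (simp add: sum_distrib_left)
  finally show ?thesis .
qed

lemma rayleigh:
  fixes r :: real
  assumes sym: "\<And>i j. i < M \<Longrightarrow> j < M \<Longrightarrow> P $$ (i,j) = P $$ (j,i)"
    and cols: "\<And>j. j < M \<Longrightarrow> (\<Sum>i<M. P $$ (i,j)) = 1"
    and Hev: "\<And>\<beta> w i0. i0 < M \<Longrightarrow> w i0 \<noteq> 0 \<Longrightarrow> (\<And>i. i < M \<Longrightarrow> mv P M w i = \<beta> * w i)
                \<Longrightarrow> (\<Sum>i<M. w i) = 0 \<Longrightarrow> \<bar>\<beta>\<bar> \<le> r"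
    and y: "(\<Sum>j<M. y j) = 0"
  shows "(\<Sum>i<M. (mv P M y i)\<^sup>2) \<le> r\<^sup>2 * (\<Sum>i<M. (y i)\<^sup>2)"
proof (cases "\<forall>i<M. y i = 0")
  case True
  hence "mv P M y i = 0" for i unfolding mv_def by simp
  thus ?thesis by (simp add: sum_nonneg)
next
  case False
  define f where "f = (\<lambda>y. \<Sum>i<M. (mv P M y i)\<^sup>2)"
  define nq where "nq = (\<lambda>y::nat \<Rightarrow> real. \<Sum>i<M. (y i)\<^sup>2)"
  define K where "K = {y. (\<forall>i. M \<le> i \<longrightarrow> y i = 0) \<and> nq y = 1 \<and> (\<Sum>i<M. y i) = 0}"
  have f_zext: "f (\<lambda>i. if i < M then z i else 0) = f z" for z
    unfolding f_def mv_def by (auto intro!: sum.cong)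
  have nq_zext: "nq (\<lambda>i. if i < M then z i else 0) = nq z" for z
    unfolding nq_def by (auto intro!: sum.cong)
  have f_scale: "f (\<lambda>i. c * z i) = c\<^sup>2 * f z" for c z
    unfolding f_def mv_scale by (simp add: power_mult_distrib sum_distrib_left)
  have nq_scale: "nq (\<lambda>i. c * z i) = c\<^sup>2 * nq z" for c z
    unfolding nq_def by (simp add: power_mult_distrib sum_distrib_left)
  have nq_nonneg: "nq z \<ge> 0" for z unfolding nq_def by (simp add: sum_nonneg)
  have nq0: "z i = 0" if "nq z = 0" "i < M" for z i
  proof -
    have "(z i)\<^sup>2 \<le> nq z" unfolding nq_def
      by (rule member_le_sum[of i "{..<M}" "\<lambda>i. (z i)\<^sup>2"]) (use that in auto)
    thus ?thesis using that by simp
  qed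
  have f0: "f z = 0" if "nq z = 0" for z
  proof -
    have "mv P M z i = 0" for i unfolding mv_def using nq0[OF that] by simp
    thus ?thesis unfolding f_def by simp
  qed
  have normK: "(\<lambda>i. (1 / sqrt (nq z)) * (if i < M then z i else 0)) \<in> K"
    if "nq z \<noteq> 0" "(\<Sum>i<M. z i) = 0" for z
  proof -
    have pos: "nq z > 0" using that nq_nonneg[of z] by simp
    have "nq (\<lambda>i. (1 / sqrt (nq z)) * (if i < M then z i else 0)) = (1 / sqrt (nq z))\<^sup>2 * nq (\<lambda>i. if i < M then z i else 0)"
      by (rule nq_scale)
    also have "\<dots> = (1 / sqrt (nq z))\<^sup>2 * nq z" by (simp only: nq_zext)
    also have "\<dots> = 1" using pos by (simp add: power_divide)
    finally have "nq (\<lambda>i. (1 / sqrt (nq z)) * (if i < M then z i else 0)) = 1" .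
    moreover have "(\<Sum>i<M. (1 / sqrt (nq z)) * (if i < M then z i else 0)) = 0"
      using that(2) by (simp add: sum_divide_distrib[symmetric])
    ultimately show ?thesis unfolding K_def by auto
  qed
  have Kne: "K \<noteq> {}"
  proof -
    have "nq y \<noteq> 0" using False nq0 by blast
    thus ?thesis using normK[OF _ y] by blast
  qed
  have Kbox: "K \<subseteq> PiE UNIV (\<lambda>_. {-1..1})"
  proof
    fix z assume z: "z \<in> K"
    have "z i \<in> {-1..1}" for i
    proof (cases "i < M")
      case True
      have "(z i)\<^sup>2 \<le> nq z" unfolding nq_def
        by (rule member_le_sum[of i "{..<M}" "\<lambda>i. (z i)\<^sup>2"]) (use True in auto)
      hence "(z i)\<^sup>2 \<le> 1" using z unfolding K_def by simp
      hence "\<bar>z i\<bar> \<le> 1" by (simp add: abs_square_le_1)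
      thus ?thesis by auto
    next
      case False thus ?thesis using z unfolding K_def by auto
    qed
    thus "z \<in> PiE UNIV (\<lambda>_. {-1..1})" by auto
  qed
  have Kclosed: "closed K"
  proof -
    have "K = (\<Inter>i\<in>{M..}. {z. z i = 0}) \<inter> {z. nq z = 1} \<inter> {z. (\<Sum>i<M. z i) = 0}"
      unfolding K_def by auto
    moreover have "closed {z::nat\<Rightarrow>real. z i = 0}" for i
      by (rule closed_Collect_eq) (auto intro!: continuous_intros)
    moreover have "closed {z. nq z = 1}"
      unfolding nq_def by (rule closed_Collect_eq) (auto intro!: continuous_intros)
    moreover have "closed {z::nat\<Rightarrow>real. (\<Sum>i<M. z i) = 0}"
      by (rule closed_Collect_eq) (auto intro!: continuous_intros)
    ultimately show ?thesis by (auto intro!: closed_Int closed_INT)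
  qed
  have Kcompact: "compact K"
  proof -
    have "compact (PiE UNIV (\<lambda>_. {-1..1::real}) \<inter> K)"
      using compact_box Kclosed by blast
    moreover have "PiE UNIV (\<lambda>_. {-1..1::real}) \<inter> K = K" using Kbox by blast
    ultimately show ?thesis by simp
  qed
  have fcont: "continuous_on K f"
    unfolding f_def mv_def by (auto intro!: continuous_intros)
  obtain ym where ymK: "ym \<in> K" and ymax: "\<And>z. z \<in> K \<Longrightarrow> f z \<le> f ym"
    using continuous_attains_sup[OF Kcompact Kne fcont] by blast
  define \<mu> where "\<mu> = f ym"
  have homog: "f z \<le> \<mu> * nq z" if "(\<Sum>i<M. z i) = 0" for z
  proof (cases "nq z = 0")
    case True thus ?thesis using f0 by simp
  next
    case False
    have pos: "nq z > 0" using False nq_nonneg[of z] by simp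
    have "f (\<lambda>i. (1 / sqrt (nq z)) * (if i < M then z i else 0)) \<le> \<mu>"
      unfolding \<mu>_def using ymax normK[OF False that] by blast
    moreover have "f (\<lambda>i. (1 / sqrt (nq z)) * (if i < M then z i else 0)) = (1 / sqrt (nq z))\<^sup>2 * f (\<lambda>i. if i < M then z i else 0)"
      by (rule f_scale)
    moreover have "\<dots> = f z / nq z" using pos by (simp only: f_zext) (simp add: power_divide)
    ultimately have "f z / nq z \<le> \<mu>" by simp
    thus ?thesis using pos by (simp add: divide_le_eq mult.commute)
  qed
  have ymsum: "(\<Sum>i<M. ym i) = 0" and ymnq: "nq ym = 1" using ymK unfolding K_def by auto
  have mu_nonneg: "\<mu> \<ge> 0" unfolding \<mu>_def f_def by (simp add: sum_nonneg)
  have foc: "(\<Sum>i<M. mv P M ym i * mv P M z i) = \<mu> * (\<Sum>i<M. ym i * z i)"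
    if z: "(\<Sum>i<M. z i) = 0" for z
  proof -
    let ?A = "(\<Sum>i<M. mv P M ym i * mv P M z i) - \<mu> * (\<Sum>i<M. ym i * z i)"
    let ?C = "f z - \<mu> * nq z"
    have "2 * s * ?A + s\<^sup>2 * ?C \<le> 0" for s
    proof -
      have sz: "(\<Sum>i<M. ym i + s * z i) = 0" using ymsum z by (simp add: sum.distrib sum_distrib_left[symmetric])
      have "f (\<lambda>i. ym i + s * z i) \<le> \<mu> * nq (\<lambda>i. ym i + s * z i)" by (rule homog[OF sz])
      moreover have "f (\<lambda>i. ym i + s * z i) = f ym + 2 * s * (\<Sum>i<M. mv P M ym i * mv P M z i) + s\<^sup>2 * f z"
        unfolding f_def mv_lin by (simp add: power2_eq_square algebra_simps sum.distrib sum_distrib_left)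
      moreover have "nq (\<lambda>i. ym i + s * z i) = nq ym + 2 * s * (\<Sum>i<M. ym i * z i) + s\<^sup>2 * nq z"
        unfolding nq_def by (simp add: power2_eq_square algebra_simps sum.distrib sum_distrib_left)
      ultimately show ?thesis using ymnq unfolding \<mu>_def by (simp add: algebra_simps)
    qed
    from quad0[OF this] show ?thesis by simp
  qed
  define u where "u = (\<lambda>j. mv P M (mv P M ym) j - \<mu> * ym j)"
  have usum: "(\<Sum>j<M. u j) = 0"
    unfolding u_def using sum_mv[OF cols, of "mv P M ym"] sum_mv[OF cols, of ym] ymsum
    by (simp add: sum_subtractf sum_distrib_left[symmetric])
  have "(\<Sum>j<M. u j * u j) = (\<Sum>j<M. u j * mv P M (mv P M ym) j) - \<mu> * (\<Sum>j<M. ym j * u j)"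
    unfolding u_def by (simp add: algebra_simps sum_subtractf sum_distrib_left)
  also have "\<dots> = 0" using foc[OF usum] mv_sym_ip[OF sym, where y=ym and z=u] by simp
  finally have "(\<Sum>j<M. (u j)\<^sup>2) = 0" by (simp add: power2_eq_square)
  hence u0: "u j = 0" if "j < M" for j
    using that by (simp add: sum_nonneg_eq_0_iff)
  define s where "s = sqrt \<mu>"
  have s2: "s * s = \<mu>" unfolding s_def using mu_nonneg by simp
  have s0: "s \<ge> 0" unfolding s_def using mu_nonneg by simp
  define v where "v = (\<lambda>j. mv P M ym j + s * ym j)"
  have vev: "mv P M v i = s * v i" if "i < M" for i
  proof -
    have "mv P M v i = mv P M (mv P M ym) i + s * mv P M ym i" unfolding v_def mv_lin ..
    also have "\<dots> = \<mu> * ym i + s * mv P M ym i" using u0[OF that] unfolding u_def by simp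
    finally show ?thesis unfolding v_def using s2 by (simp add: algebra_simps)
  qed
  have vsum: "(\<Sum>i<M. v i) = 0"
    unfolding v_def using sum_mv[OF cols, of ym] ymsum by (simp add: sum.distrib sum_distrib_left[symmetric])
  have sr: "s \<le> r"
  proof (cases "\<exists>i0<M. v i0 \<noteq> 0")
    case True
    then obtain i0 where "i0 < M" "v i0 \<noteq> 0" by blast
    from Hev[OF this vev vsum] s0 show ?thesis by simp
  next
    case False
    have ev2: "mv P M ym i = (- s) * ym i" if "i < M" for i
      using False that unfolding v_def by (auto simp: algebra_simps)
    have "\<exists>i0<M. ym i0 \<noteq> 0"
    proof (rule ccontr)
      assume "\<not> (\<exists>i0<M. ym i0 \<noteq> 0)"
      hence "nq ym = 0" unfolding nq_def by simp
      thus False using ymnq by simp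
    qed
    then obtain i0 where "i0 < M" "ym i0 \<noteq> 0" by blast
    from Hev[OF this ev2 ymsum] s0 show ?thesis by simp
  qed
  have "\<mu> = s\<^sup>2" using s2 by (simp add: power2_eq_square)
  also have "\<dots> \<le> r\<^sup>2" by (rule power_mono[OF sr s0])
  finally have mur: "\<mu> \<le> r\<^sup>2" .
  have "f y \<le> \<mu> * nq y" by (rule homog[OF y])
  also have "\<dots> \<le> r\<^sup>2 * nq y" by (rule mult_right_mono[OF mur nq_nonneg])
  finally have "f y \<le> r\<^sup>2 * nq y" .
  thus ?thesis unfolding f_def nq_def .
qed



definition avgv :: "nat \<Rightarrow> (nat \<Rightarrow> 'x::real_normed_vector) \<Rightarrow> 'x" where
  "avgv M v = (1 / real M) *\<^sub>R (\<Sum>j<M. v j)"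

definition cd :: "nat \<Rightarrow> (nat \<Rightarrow> 'x::real_normed_vector) \<Rightarrow> real" where
  "cd M v = (\<Sum>i<M. (norm (v i - avgv M v))\<^sup>2)"

lemma cd_nonneg: "cd M v \<ge> 0"
  unfolding cd_def by (simp add: sum_nonneg)

lemma young_real:
  fixes x y c :: real
  assumes c: "c > 0"
  shows "(x + y)\<^sup>2 \<le> (1 + c) * x\<^sup>2 + (1 + 1 / c) * y\<^sup>2"
proof -
  have "0 \<le> (c * x - y)\<^sup>2 / c" using c by simp
  also have "(c * x - y)\<^sup>2 / c = c * x\<^sup>2 - 2 * x * y + y\<^sup>2 / c"
    using c by (simp add: power2_eq_square field_simps)
  finally have "2 * x * y \<le> c * x\<^sup>2 + y\<^sup>2 / c" by simp
  thus ?thesis by (simp add: power2_eq_square algebra_simps)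
qed

lemma young_norm:
  fixes a b :: "'x::real_normed_vector"
  assumes c: "c > 0"
  shows "(norm (a + b))\<^sup>2 \<le> (1 + c) * (norm a)\<^sup>2 + (1 + 1 / c) * (norm b)\<^sup>2"
proof -
  have "(norm (a + b))\<^sup>2 \<le> (norm a + norm b)\<^sup>2"
    by (rule power_mono[OF norm_triangle_ineq]) simp
  also have "\<dots> \<le> (1 + c) * (norm a)\<^sup>2 + (1 + 1 / c) * (norm b)\<^sup>2" by (rule young_real[OF c])
  finally show ?thesis .
qed

lemma three_norm:
  fixes a b d :: "'x::real_normed_vector"
  shows "(norm (a + b + d))\<^sup>2 \<le> 3 * ((norm a)\<^sup>2 + (norm b)\<^sup>2 + (norm d)\<^sup>2)"
proof -
  have "(norm (a + b + d))\<^sup>2 \<le> (norm a + norm b + norm d)\<^sup>2"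
    by (rule power_mono) (auto intro: order_trans[OF norm_triangle_ineq] add_right_mono norm_triangle_ineq)
  also have "\<dots> \<le> 3 * ((norm a)\<^sup>2 + (norm b)\<^sup>2 + (norm d)\<^sup>2)"
  proof -
    have "0 \<le> (norm a - norm b)\<^sup>2 + (norm b - norm d)\<^sup>2 + (norm a - norm d)\<^sup>2" by simp
    thus ?thesis by (simp add: power2_eq_square algebra_simps)
  qed
  finally show ?thesis .
qed

lemma avgv_add: "avgv M (\<lambda>i. u i + v i) = avgv M u + avgv M v"
  unfolding avgv_def by (simp add: sum.distrib scaleR_add_right)

lemma avgv_scale: "avgv M (\<lambda>i. c *\<^sub>R v i) = c *\<^sub>R avgv M v"
  unfolding avgv_def by (simp add: scaleR_sum_right[symmetric])

lemma cd_young: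
  assumes c: "c > 0"
  shows "cd M (\<lambda>i. u i + v i) \<le> (1 + c) * cd M u + (1 + 1 / c) * cd M v"
proof -
  have "cd M (\<lambda>i. u i + v i) = (\<Sum>i<M. (norm ((u i - avgv M u) + (v i - avgv M v)))\<^sup>2)"
    unfolding cd_def avgv_add by (simp add: algebra_simps)
  also have "\<dots> \<le> (\<Sum>i<M. (1 + c) * (norm (u i - avgv M u))\<^sup>2 + (1 + 1 / c) * (norm (v i - avgv M v))\<^sup>2)"
    by (rule sum_mono) (rule young_norm[OF c])
  also have "\<dots> = (1 + c) * cd M u + (1 + 1 / c) * cd M v"
    unfolding cd_def by (simp add: sum.distrib sum_distrib_left)
  finally show ?thesis .
qed

lemma cd_three:
  "cd M (\<lambda>i. a i + b i + d i) \<le> 3 * (cd M a + cd M b + cd M d)"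
proof -
  have "cd M (\<lambda>i. a i + b i + d i) = (\<Sum>i<M. (norm ((a i - avgv M a) + (b i - avgv M b) + (d i - avgv M d)))\<^sup>2)"
    unfolding cd_def avgv_add by (simp add: algebra_simps)
  also have "\<dots> \<le> (\<Sum>i<M. 3 * ((norm (a i - avgv M a))\<^sup>2 + (norm (b i - avgv M b))\<^sup>2 + (norm (d i - avgv M d))\<^sup>2))"
    by (rule sum_mono) (rule three_norm)
  also have "\<dots> = 3 * (cd M a + cd M b + cd M d)"
    unfolding cd_def by (simp add: sum.distrib sum_distrib_left)
  finally show ?thesis .
qed

lemma cd_scale: "cd M (\<lambda>i. c *\<^sub>R v i) = c\<^sup>2 * cd M v"
proof -
  have "cd M (\<lambda>i. c *\<^sub>R v i) = (\<Sum>i<M. (norm (c *\<^sub>R (v i - avgv M v)))\<^sup>2)"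
    unfolding cd_def avgv_scale by (simp add: scaleR_diff_right)
  also have "\<dots> = c\<^sup>2 * cd M v"
    unfolding cd_def by (simp add: power_mult_distrib sum_distrib_left)
  finally show ?thesis .
qed

lemma cd_le_sq:
  fixes v :: "nat \<Rightarrow> 'x::real_inner"
  shows "cd M v \<le> (\<Sum>i<M. (norm (v i))\<^sup>2)"
proof (cases "M = 0")
  case True thus ?thesis unfolding cd_def by simp
next
  case False
  define m where "m = avgv M v"
  have sv: "(\<Sum>i<M. v i) = real M *\<^sub>R m" unfolding m_def avgv_def using False by simp
  have "cd M v = (\<Sum>i<M. (norm (v i))\<^sup>2 - 2 * inner (v i) m + (norm m)\<^sup>2)"
    unfolding cd_def m_def[symmetric]
    by (rule sum.cong) (simp_all add: power2_norm_eq_inner inner_diff_left inner_diff_right inner_commute)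
  also have "\<dots> = (\<Sum>i<M. (norm (v i))\<^sup>2) - 2 * inner (\<Sum>i<M. v i) m + real M * (norm m)\<^sup>2"
    by (simp add: sum.distrib sum_subtractf inner_sum_left sum_distrib_left)
  also have "\<dots> = (\<Sum>i<M. (norm (v i))\<^sup>2) - real M * (norm m)\<^sup>2"
    unfolding sv by (simp add: power2_norm_eq_inner)
  also have "\<dots> \<le> (\<Sum>i<M. (norm (v i))\<^sup>2)" by simp
  finally show ?thesis .
qed

lemma norm_sq_basis:
  fixes x :: "'x::euclidean_space"
  shows "(norm x)\<^sup>2 = (\<Sum>b\<in>Basis. (inner x b)\<^sup>2)"
  unfolding power2_norm_eq_inner by (subst euclidean_inner) (simp add: power2_eq_square)

lemma cd_gossip:
  fixes v :: "nat \<Rightarrow> 'x::euclidean_space" and r :: real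
  assumes M: "M \<ge> 1"
    and rows: "\<And>i. i < M \<Longrightarrow> (\<Sum>j<M. P $$ (i,j)) = 1"
    and cols: "\<And>j. j < M \<Longrightarrow> (\<Sum>i<M. P $$ (i,j)) = 1"
    and contr: "\<And>y. (\<Sum>j<M. y j) = 0 \<Longrightarrow> (\<Sum>i<M. (mv P M y i)\<^sup>2) \<le> r\<^sup>2 * (\<Sum>i<M. (y i)\<^sup>2)"
  shows "cd M (\<lambda>i. \<Sum>j<M. P $$ (i,j) *\<^sub>R v j) \<le> r\<^sup>2 * cd M v"
proof -
  define m where "m = avgv M v"
  define e where "e = (\<lambda>j. v j - m)"
  have Mpos: "real M > 0" using M by simp
  have Mm: "real M *\<^sub>R m = (\<Sum>j<M. v j)" unfolding m_def avgv_def using Mpos by simp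
  have esum: "(\<Sum>j<M. e j) = 0"
    unfolding e_def by (simp add: sum_subtractf Mm sum_constant_scaleR)
  have avgP: "avgv M (\<lambda>i. \<Sum>j<M. P $$ (i,j) *\<^sub>R v j) = m"
  proof -
    have "(\<Sum>i<M. \<Sum>j<M. P $$ (i,j) *\<^sub>R v j) = (\<Sum>j<M. (\<Sum>i<M. P $$ (i,j)) *\<^sub>R v j)"
      by (subst sum.swap) (simp add: scaleR_sum_left)
    also have "\<dots> = (\<Sum>j<M. v j)" using cols by simp
    finally show ?thesis unfolding avgv_def m_def by simp
  qed
  have Pe: "(\<Sum>j<M. P $$ (i,j) *\<^sub>R v j) - m = (\<Sum>j<M. P $$ (i,j) *\<^sub>R e j)" if "i < M" for i
  proof -
    have "(\<Sum>j<M. P $$ (i,j) *\<^sub>R e j) = (\<Sum>j<M. P $$ (i,j) *\<^sub>R v j) - (\<Sum>j<M. P $$ (i,j)) *\<^sub>R m"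
      unfolding e_def by (simp add: scaleR_diff_right sum_subtractf scaleR_sum_left)
    thus ?thesis using rows[OF that] by simp
  qed
  define y where "y = (\<lambda>b j. inner (e j) b)"
  have ysum: "(\<Sum>j<M. y b j) = 0" for b
    unfolding y_def using esum by (simp add: inner_sum_left[symmetric])
  have comp: "inner (\<Sum>j<M. P $$ (i,j) *\<^sub>R e j) b = mv P M (y b) i" for i b
    unfolding y_def mv_def by (simp add: inner_sum_left)
  have "cd M (\<lambda>i. \<Sum>j<M. P $$ (i,j) *\<^sub>R v j) = (\<Sum>i<M. (norm (\<Sum>j<M. P $$ (i,j) *\<^sub>R e j))\<^sup>2)"
    unfolding cd_def avgP using Pe by (auto intro!: sum.cong)
  also have "\<dots> = (\<Sum>i<M. \<Sum>b\<in>Basis. (mv P M (y b) i)\<^sup>2)"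
    by (simp add: norm_sq_basis comp)
  also have "\<dots> = (\<Sum>b\<in>Basis. \<Sum>i<M. (mv P M (y b) i)\<^sup>2)" by (rule sum.swap)
  also have "\<dots> \<le> (\<Sum>b\<in>Basis. r\<^sup>2 * (\<Sum>i<M. (y b i)\<^sup>2))"
    by (rule sum_mono) (rule contr[OF ysum])
  also have "\<dots> = r\<^sup>2 * (\<Sum>i<M. \<Sum>b\<in>Basis. (y b i)\<^sup>2)"
    by (simp add: sum_distrib_left[symmetric]) (rule disjI2, rule sum.swap)
  also have "\<dots> = r\<^sup>2 * cd M v"
    unfolding cd_def m_def[symmetric] y_def e_def by (simp add: norm_sq_basis)
  finally show ?thesis .
qed



lemma gauss_real: "(\<Sum>s=1..t. real s) = real t * (real t + 1) / 2"
  by (induction t) (auto simp: field_simps)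

lemma delta_bounds:
  assumes "t \<ge> 1"
  shows "real t / (\<Sum>s=1..t. real s) \<ge> 0" "real t / (\<Sum>s=1..t. real s) \<le> 1"
    "(real t / (\<Sum>s=1..t. real s))\<^sup>2 * (real t)\<^sup>2 \<le> 4"
proof -
  have tp: "real t \<ge> 1" using assms by simp
  have h: "real t + real t * real t \<noteq> 0" using tp by (smt (verit) mult_nonneg_nonneg)
  have d: "real t / (\<Sum>s=1..t. real s) = 2 / (real t + 1)"
    unfolding gauss_real using tp h by (simp add: field_simps)
  show "real t / (\<Sum>s=1..t. real s) \<ge> 0" unfolding d by simp
  show "real t / (\<Sum>s=1..t. real s) \<le> 1" unfolding d using tp by simp
  have A: "2 / (real t + 1) * real t \<le> 2" using tp by (simp add: field_simps)
  have B: "2 / (real t + 1) * real t \<ge> 0" by simp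
  have "(2 / (real t + 1) * real t)\<^sup>2 \<le> 2\<^sup>2" by (rule power_mono[OF A B])
  moreover have "(2 / (real t + 1))\<^sup>2 * (real t)\<^sup>2 = (2 / (real t + 1) * real t)\<^sup>2"
    by (simp only: power_mult_distrib)
  ultimately show "(real t / (\<Sum>s=1..t. real s))\<^sup>2 * (real t)\<^sup>2 \<le> 4" unfolding d by simp
qed

lemma psi_bound:
  fixes x :: "nat \<Rightarrow> 'x::euclidean_space" and gF :: "nat \<Rightarrow> 'x \<Rightarrow> 'x" and g :: "nat \<Rightarrow> 'x"
  assumes M1: "M \<ge> 1"
    and smooth: "\<And>i x y. i < M \<Longrightarrow> norm (gF i x - gF i y) \<le> L * norm (x - y)" and L: "L \<ge> 0"
    and het: "\<And>x. (1 / real M) * (\<Sum>i<M. (norm (gF i x - (1 / real M) *\<^sub>R (\<Sum>j<M. gF j x)))\<^sup>2) \<le> \<zeta>\<^sup>2"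
  shows "cd M g \<le> 3 * (\<Sum>i<M. (norm (g i - gF i (x i)))\<^sup>2) + 3 * L\<^sup>2 * cd M x + 3 * real M * \<zeta>\<^sup>2"
proof -
  define xb where "xb = avgv M x"
  have "cd M g = cd M (\<lambda>i. (g i - gF i (x i)) + (gF i (x i) - gF i xb) + gF i xb)"
    by simp
  also have "\<dots> \<le> 3 * (cd M (\<lambda>i. g i - gF i (x i)) + cd M (\<lambda>i. gF i (x i) - gF i xb) + cd M (\<lambda>i. gF i xb))"
    by (rule cd_three)
  also have "\<dots> \<le> 3 * ((\<Sum>i<M. (norm (g i - gF i (x i)))\<^sup>2) + L\<^sup>2 * cd M x + real M * \<zeta>\<^sup>2)"
  proof -
    have a: "cd M (\<lambda>i. g i - gF i (x i)) \<le> (\<Sum>i<M. (norm (g i - gF i (x i)))\<^sup>2)" by (rule cd_le_sq)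
    have "cd M (\<lambda>i. gF i (x i) - gF i xb) \<le> (\<Sum>i<M. (norm (gF i (x i) - gF i xb))\<^sup>2)" by (rule cd_le_sq)
    also have "\<dots> \<le> (\<Sum>i<M. L\<^sup>2 * (norm (x i - xb))\<^sup>2)"
    proof (rule sum_mono)
      fix i assume "i \<in> {..<M}"
      hence "norm (gF i (x i) - gF i xb) \<le> L * norm (x i - xb)" using smooth by simp
      hence "(norm (gF i (x i) - gF i xb))\<^sup>2 \<le> (L * norm (x i - xb))\<^sup>2" by (rule power_mono) simp
      thus "(norm (gF i (x i) - gF i xb))\<^sup>2 \<le> L\<^sup>2 * (norm (x i - xb))\<^sup>2" by (simp add: power_mult_distrib)
    qed
    also have "\<dots> = L\<^sup>2 * cd M x" unfolding cd_def xb_def by (simp add: sum_distrib_left)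
    finally have b: "cd M (\<lambda>i. gF i (x i) - gF i xb) \<le> L\<^sup>2 * cd M x" .
    have "cd M (\<lambda>i. gF i xb) = real M * ((1 / real M) * (\<Sum>i<M. (norm (gF i xb - (1 / real M) *\<^sub>R (\<Sum>j<M. gF j xb)))\<^sup>2))"
      unfolding cd_def avgv_def using M1 by simp
    also have "\<dots> \<le> real M * \<zeta>\<^sup>2" by (rule mult_left_mono[OF het]) simp
    finally have c: "cd M (\<lambda>i. gF i xb) \<le> real M * \<zeta>\<^sup>2" .
    show ?thesis using a b c by simp
  qed
  finally show ?thesis by simp
qed

lemma step_bounds:
  fixes w x :: "nat \<Rightarrow> 'x::euclidean_space"
  assumes M1: "M \<ge> 1" and rho: "0 < \<rho>" "\<rho> \<le> 1"
    and gos: "\<And>v::nat \<Rightarrow> 'x. cd M (\<lambda>i. \<Sum>j<M. P $$ (i,j) *\<^sub>R v j) \<le> (1 - \<rho>)\<^sup>2 * cd M v"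
    and smooth: "\<And>i x y. i < M \<Longrightarrow> norm (gF i x - gF i y) \<le> L * norm (x - y)" and L: "L \<ge> 0"
    and het: "\<And>x. (1 / real M) * (\<Sum>i<M. (norm (gF i x - (1 / real M) *\<^sub>R (\<Sum>j<M. gF j x)))\<^sup>2) \<le> \<zeta>\<^sup>2"
    and t: "t \<ge> 1"
    and st: "dat_step M P gf eta (\<lambda>s. real s) t zs (w, x) = (w', x')"
  defines "N \<equiv> (\<Sum>i<M. (norm (gf i (x i) (zs i) - gF i (x i)))\<^sup>2)"
    and "\<delta> \<equiv> real t / (\<Sum>s=1..t. real s)"
  shows "cd M w' \<le> (1 - \<rho>/2) * cd M w + (3/\<rho>) * eta\<^sup>2 * (real t)\<^sup>2 * (3 * N + 3 * L\<^sup>2 * cd M x + 3 * real M * \<zeta>\<^sup>2)"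
    and "cd M x' \<le> (1 - \<rho>/2) * cd M x + (3/\<rho>) * \<delta>\<^sup>2 * ((1 + \<rho>/2) * cd M w + (3/\<rho>) * eta\<^sup>2 * (real t)\<^sup>2 * (3 * N + 3 * L\<^sup>2 * cd M x + 3 * real M * \<zeta>\<^sup>2))"
proof -
  define g where "g = (\<lambda>i. gf i (x i) (zs i))"
  define wh where "wh = (\<lambda>i. w i - (eta * real t) *\<^sub>R g i)"
  define xh where "xh = (\<lambda>i. (1 - \<delta>) *\<^sub>R x i + \<delta> *\<^sub>R wh i)"
  have w': "w' = (\<lambda>i. \<Sum>j<M. P $$ (i,j) *\<^sub>R wh j)" and x': "x' = (\<lambda>i. \<Sum>j<M. P $$ (i,j) *\<^sub>R xh j)"
    using st unfolding dat_step_def Let_def g_def wh_def xh_def \<delta>_def by auto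
  define c where "c = \<rho> / 2"
  have c: "c > 0" unfolding c_def using rho by simp
  have k1: "(1 - \<rho>)\<^sup>2 * (1 + c) \<le> 1 - \<rho>/2"
  proof -
    have "(1 - \<rho>)\<^sup>2 * (1 + \<rho>/2) \<le> (1 - \<rho>) * (1 + \<rho>/2)"
      using rho by (intro mult_right_mono) (auto simp: power2_eq_square intro!: mult_left_le_one_le)
    also have "\<dots> \<le> 1 - \<rho>/2" using rho by (simp add: algebra_simps)
    finally show ?thesis unfolding c_def .
  qed
  have k2: "(1 - \<rho>)\<^sup>2 * (1 + 1 / c) \<le> 3 / \<rho>"
  proof -
    have "(1 - \<rho>)\<^sup>2 \<le> 1" using rho by (simp add: power_le_one)
    moreover have "1 + 1 / c \<le> 3 / \<rho>" unfolding c_def using rho by (simp add: field_simps)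
    moreover have "1 + 1 / c \<ge> 0" using c by simp
    ultimately show ?thesis by (metis mult_left_le_one_le mult.commute order_trans zero_le_power2 mult_right_mono)
  qed
  have k3: "1 + 1 / c \<le> 3 / \<rho>" unfolding c_def using rho by (simp add: field_simps)
  have dl: "\<delta> \<ge> 0" "\<delta> \<le> 1" unfolding \<delta>_def using delta_bounds[OF t] by auto
  have psi: "cd M g \<le> 3 * N + 3 * L\<^sup>2 * cd M x + 3 * real M * \<zeta>\<^sup>2"
    using psi_bound[OF M1 smooth L het, of g x] unfolding N_def g_def by simp
  have cdg_nn: "cd M g \<ge> 0" by (rule cd_nonneg)
  have wh_bound: "cd M wh \<le> (1 + c) * cd M w + (3/\<rho>) * eta\<^sup>2 * (real t)\<^sup>2 * cd M g"
  proof -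
    have "cd M wh = cd M (\<lambda>i. w i + (- (eta * real t)) *\<^sub>R g i)" unfolding wh_def by simp
    also have "\<dots> \<le> (1 + c) * cd M w + (1 + 1 / c) * cd M (\<lambda>i. (- (eta * real t)) *\<^sub>R g i)"
      by (rule cd_young[OF c])
    also have "\<dots> = (1 + c) * cd M w + (1 + 1 / c) * ((eta * real t)\<^sup>2 * cd M g)"
      using cd_scale[of M "- (eta * real t)" g] by simp
    also have "\<dots> \<le> (1 + c) * cd M w + (3/\<rho>) * ((eta * real t)\<^sup>2 * cd M g)"
      by (intro add_left_mono mult_right_mono k3) (simp add: cdg_nn)
    finally show ?thesis by (simp add: power_mult_distrib mult.assoc)
  qed
  show "cd M w' \<le> (1 - \<rho>/2) * cd M w + (3/\<rho>) * eta\<^sup>2 * (real t)\<^sup>2 * (3 * N + 3 * L\<^sup>2 * cd M x + 3 * real M * \<zeta>\<^sup>2)"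
  proof -
    have "cd M w' \<le> (1 - \<rho>)\<^sup>2 * cd M wh" unfolding w' by (rule gos)
    also have "\<dots> \<le> (1 - \<rho>)\<^sup>2 * ((1 + c) * cd M w + (1 + 1 / c) * cd M (\<lambda>i. (- (eta * real t)) *\<^sub>R g i))"
    proof -
      have "cd M wh = cd M (\<lambda>i. w i + (- (eta * real t)) *\<^sub>R g i)" unfolding wh_def by simp
      thus ?thesis using cd_young[OF c, of M w "\<lambda>i. (- (eta * real t)) *\<^sub>R g i"]
        by (simp add: mult_left_mono)
    qed
    also have "\<dots> = ((1 - \<rho>)\<^sup>2 * (1 + c)) * cd M w + ((1 - \<rho>)\<^sup>2 * (1 + 1 / c)) * ((eta * real t)\<^sup>2 * cd M g)"
      using cd_scale[of M "- (eta * real t)" g] by (simp add: algebra_simps)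
    also have "\<dots> \<le> (1 - \<rho>/2) * cd M w + (3/\<rho>) * ((eta * real t)\<^sup>2 * cd M g)"
      by (intro add_mono mult_right_mono k1 k2) (simp_all add: cd_nonneg)
    also have "\<dots> \<le> (1 - \<rho>/2) * cd M w + (3/\<rho>) * ((eta * real t)\<^sup>2 * (3 * N + 3 * L\<^sup>2 * cd M x + 3 * real M * \<zeta>\<^sup>2))"
      using rho by (intro add_left_mono mult_left_mono psi) auto
    finally show ?thesis by (simp add: power_mult_distrib mult.assoc)
  qed
  show "cd M x' \<le> (1 - \<rho>/2) * cd M x + (3/\<rho>) * \<delta>\<^sup>2 * ((1 + \<rho>/2) * cd M w + (3/\<rho>) * eta\<^sup>2 * (real t)\<^sup>2 * (3 * N + 3 * L\<^sup>2 * cd M x + 3 * real M * \<zeta>\<^sup>2))"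
  proof -
    have "cd M x' \<le> (1 - \<rho>)\<^sup>2 * cd M xh" unfolding x' by (rule gos)
    also have "\<dots> \<le> (1 - \<rho>)\<^sup>2 * ((1 + c) * cd M (\<lambda>i. (1 - \<delta>) *\<^sub>R x i) + (1 + 1 / c) * cd M (\<lambda>i. \<delta> *\<^sub>R wh i))"
      unfolding xh_def by (rule mult_left_mono[OF cd_young[OF c]]) simp
    also have "\<dots> = ((1 - \<rho>)\<^sup>2 * (1 + c)) * ((1 - \<delta>)\<^sup>2 * cd M x) + ((1 - \<rho>)\<^sup>2 * (1 + 1 / c)) * (\<delta>\<^sup>2 * cd M wh)"
      by (simp only: cd_scale) (simp add: algebra_simps)
    also have "\<dots> \<le> (1 - \<rho>/2) * ((1 - \<delta>)\<^sup>2 * cd M x) + (3/\<rho>) * (\<delta>\<^sup>2 * cd M wh)"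
      by (intro add_mono mult_right_mono k1 k2) (simp_all add: cd_nonneg)
    also have "\<dots> \<le> (1 - \<rho>/2) * cd M x + (3/\<rho>) * (\<delta>\<^sup>2 * ((1 + \<rho>/2) * cd M w + (3/\<rho>) * eta\<^sup>2 * (real t)\<^sup>2 * (3 * N + 3 * L\<^sup>2 * cd M x + 3 * real M * \<zeta>\<^sup>2)))"
    proof (intro add_mono mult_left_mono)
      have "(1 - \<delta>)\<^sup>2 \<le> 1" using dl by (simp add: power_le_one)
      thus "(1 - \<delta>)\<^sup>2 * cd M x \<le> cd M x" using cd_nonneg[of M x] by (simp add: mult_left_le_one_le)
      show "1 - \<rho>/2 \<ge> 0" using rho by simp
      show "3/\<rho> \<ge> 0" "\<delta>\<^sup>2 \<ge> 0" using rho by auto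
      have "cd M wh \<le> (1 + c) * cd M w + (3/\<rho>) * eta\<^sup>2 * (real t)\<^sup>2 * cd M g" by (rule wh_bound)
      also have "\<dots> \<le> (1 + c) * cd M w + (3/\<rho>) * eta\<^sup>2 * (real t)\<^sup>2 * (3 * N + 3 * L\<^sup>2 * cd M x + 3 * real M * \<zeta>\<^sup>2)"
        using rho by (intro add_left_mono mult_left_mono psi) auto
      finally show "cd M wh \<le> (1 + \<rho>/2) * cd M w + (3/\<rho>) * eta\<^sup>2 * (real t)\<^sup>2 * (3 * N + 3 * L\<^sup>2 * cd M x + 3 * real M * \<zeta>\<^sup>2)"
        unfolding c_def .
    qed
    finally show ?thesis by (simp add: mult.assoc)
  qed
qed



lemma step_cong:
  assumes "\<And>j. j < M \<Longrightarrow> zs j = zs' j"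
  shows "dat_step M P gf eta alpha t zs wx = dat_step M P gf eta alpha t zs' wx"
  unfolding dat_step_def Let_def using assms by (auto intro!: sum.cong ext)

lemma iter_dep:
  assumes "\<And>s j. 1 \<le> s \<Longrightarrow> s < t \<Longrightarrow> j < M \<Longrightarrow> z s j = z' s j"
  shows "dat_iter M P gf eta alpha w1 z t = dat_iter M P gf eta alpha w1 z' t"
  using assms
proof (induction t)
  case 0 thus ?case by simp
next
  case (Suc t)
  show ?case
  proof (cases "t = 0")
    case True thus ?thesis by simp
  next
    case False
    have IH: "dat_iter M P gf eta alpha w1 z t = dat_iter M P gf eta alpha w1 z' t"
      using Suc.IH Suc.prems by auto
    have "dat_step M P gf eta alpha t (z t) (dat_iter M P gf eta alpha w1 z' t)
        = dat_step M P gf eta alpha t (z' t) (dat_iter M P gf eta alpha w1 z' t)"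
      by (rule step_cong) (use Suc.prems False in auto)
    thus ?thesis using False IH by simp
  qed
qed

lemma iter_meas:
  fixes zf :: "nat \<Rightarrow> nat \<Rightarrow> 'n \<Rightarrow> 'z" and gf :: "nat \<Rightarrow> 'x::euclidean_space \<Rightarrow> 'z \<Rightarrow> 'x"
  assumes gfm: "\<And>i. i < M \<Longrightarrow> (\<lambda>(x, z). gf i x z) \<in> borel_measurable (borel \<Otimes>\<^sub>M D i)"
    and zm: "\<And>s j. 1 \<le> s \<Longrightarrow> s < t \<Longrightarrow> j < M \<Longrightarrow> zf s j \<in> measurable N (D j)"
  shows "(\<lambda>\<omega>. fst (dat_iter M P gf eta alpha w1 (\<lambda>s j. zf s j \<omega>) t) i) \<in> borel_measurable N \<and>
         (\<lambda>\<omega>. snd (dat_iter M P gf eta alpha w1 (\<lambda>s j. zf s j \<omega>) t) i) \<in> borel_measurable N"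
  using zm
proof (induction t arbitrary: i)
  case 0 thus ?case by simp
next
  case (Suc t)
  show ?case
  proof (cases "t = 0")
    case True thus ?thesis by simp
  next
    case False
    define W where "W = (\<lambda>\<omega>. fst (dat_iter M P gf eta alpha w1 (\<lambda>s j. zf s j \<omega>) t))"
    define X where "X = (\<lambda>\<omega>. snd (dat_iter M P gf eta alpha w1 (\<lambda>s j. zf s j \<omega>) t))"
    have IH: "(\<lambda>\<omega>. W \<omega> j) \<in> borel_measurable N" "(\<lambda>\<omega>. X \<omega> j) \<in> borel_measurable N" for j
      using Suc.IH[of j] Suc.prems unfolding W_def X_def by auto
    have G: "(\<lambda>\<omega>. gf j (X \<omega> j) (zf t j \<omega>)) \<in> borel_measurable N" if j: "j < M" for j
    proof -
      have "(\<lambda>\<omega>. (X \<omega> j, zf t j \<omega>)) \<in> measurable N (borel \<Otimes>\<^sub>M D j)"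
        using IH(2)[of j] Suc.prems[of t j] False j by (auto intro!: measurable_Pair)
      from measurable_comp[OF this gfm[OF j]] show ?thesis by (simp add: comp_def)
    qed
    have WH: "(\<lambda>\<omega>. W \<omega> j - (eta * alpha t) *\<^sub>R gf j (X \<omega> j) (zf t j \<omega>)) \<in> borel_measurable N" if "j < M" for j
      using IH(1)[of j] G[OF that] by (intro borel_measurable_diff borel_measurable_scaleR) auto
    define \<delta> where "\<delta> = alpha t / (\<Sum>s = 1..t. alpha s)"
    have XH: "(\<lambda>\<omega>. (1 - \<delta>) *\<^sub>R X \<omega> j + \<delta> *\<^sub>R (W \<omega> j - (eta * alpha t) *\<^sub>R gf j (X \<omega> j) (zf t j \<omega>))) \<in> borel_measurable N"
      if "j < M" for j
      using IH(2)[of j] WH[OF that] by (intro borel_measurable_add borel_measurable_scaleR) auto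
    have eq: "dat_iter M P gf eta alpha w1 (\<lambda>s j. zf s j \<omega>) (Suc t) =
      ((\<lambda>i. \<Sum>j<M. P $$ (i, j) *\<^sub>R (W \<omega> j - (eta * alpha t) *\<^sub>R gf j (X \<omega> j) (zf t j \<omega>))),
       (\<lambda>i. \<Sum>j<M. P $$ (i, j) *\<^sub>R ((1 - \<delta>) *\<^sub>R X \<omega> j + \<delta> *\<^sub>R (W \<omega> j - (eta * alpha t) *\<^sub>R gf j (X \<omega> j) (zf t j \<omega>)))))" for \<omega>
      using False unfolding W_def X_def \<delta>_def by (simp add: dat_step_def Let_def)
    show ?thesis unfolding eq using WH XH
      by (auto intro!: borel_measurable_sum borel_measurable_scaleR)
  qed
qed

lemma cd_meas:
  fixes V :: "'n \<Rightarrow> nat \<Rightarrow> 'x::euclidean_space"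
  assumes "\<And>i. (\<lambda>\<omega>. V \<omega> i) \<in> borel_measurable N"
  shows "(\<lambda>\<omega>. cd M (V \<omega>)) \<in> borel_measurable N"
  unfolding cd_def avgv_def using assms
  by (auto intro!: borel_measurable_sum borel_measurable_power borel_measurable_norm borel_measurable_diff borel_measurable_scaleR)

lemma noise_bound:
  fixes gf :: "nat \<Rightarrow> 'x::euclidean_space \<Rightarrow> 'z \<Rightarrow> 'x" and gF :: "nat \<Rightarrow> 'x \<Rightarrow> 'x"
    and Z :: "nat \<Rightarrow> nat \<Rightarrow> 'w \<Rightarrow> 'z" and sigma :: real
  assumes S_prob: "prob_space S"
    and D_prob: "\<And>i. i < M \<Longrightarrow> prob_space (D i)"
    and gfm: "\<And>i. i < M \<Longrightarrow> (\<lambda>(x, z). gf i x z) \<in> borel_measurable (borel \<Otimes>\<^sub>M D i)"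
    and gFm: "\<And>i. i < M \<Longrightarrow> gF i \<in> borel_measurable borel"
    and variance: "\<And>i x. i < M \<Longrightarrow>
        (\<integral>\<^sup>+ z. ennreal ((norm (gf i x z - gF i x))\<^sup>2) \<partial>D i) \<le> ennreal (sigma\<^sup>2)"
    and Z_distr: "\<And>s i. s \<ge> 1 \<Longrightarrow> i < M \<Longrightarrow>
        Z s i \<in> measurable S (D i) \<and> distr S (D i) (Z s i) = D i"
    and Z_indep: "prob_space.indep_vars S (\<lambda>(s, i). D i) (\<lambda>(s, i). Z s i) ({1..} \<times> {..<M})"
    and t: "t \<ge> 1" and i: "i < M"
  shows "(\<integral>\<^sup>+ \<omega>. ennreal ((norm (gf i (snd (dat_iter M P gf eta alpha w1 (\<lambda>s j. Z s j \<omega>) t) i) (Z t i \<omega>)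
             - gF i (snd (dat_iter M P gf eta alpha w1 (\<lambda>s j. Z s j \<omega>) t) i)))\<^sup>2) \<partial>S) \<le> ennreal (sigma\<^sup>2)"
proof -
  interpret S: prob_space S by (rule S_prob)
  define X where "X = (\<lambda>\<omega>. snd (dat_iter M P gf eta alpha w1 (\<lambda>s j. Z s j \<omega>) t) i)"
  define M' where "M' = (\<lambda>(s::nat, j::nat). D j)"
  define Xf where "Xf = (\<lambda>(s::nat, j::nat). Z s j)"
  define A where "A = {1..<t} \<times> {..<M}"
  define B where "B = {(t, i)}"
  have ind0: "S.indep_vars M' Xf ({1..} \<times> {..<M})" using Z_indep unfolding M'_def Xf_def .
  have ind1: "S.indep_var (PiM A M') (\<lambda>\<omega>. restrict (\<lambda>k. Xf k \<omega>) A) (PiM B M') (\<lambda>\<omega>. restrict (\<lambda>k. Xf k \<omega>) B)"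
    by (rule S.indep_var_restrict[OF ind0]) (use t i in \<open>auto simp: A_def B_def\<close>)
  define \<Phi> where "\<Phi> = (\<lambda>f. snd (dat_iter M P gf eta alpha w1 (\<lambda>s j. f (s, j)) t) i)"
  define \<Psi> where "\<Psi> = (\<lambda>f::nat \<times> nat \<Rightarrow> 'z. f (t, i))"
  have \<Phi>m: "\<Phi> \<in> borel_measurable (PiM A M')"
  proof -
    have "(\<lambda>f. f (s, j)) \<in> measurable (PiM A M') (D j)" if "1 \<le> s" "s < t" "j < M" for s j
    proof -
      have "(s, j) \<in> A" using that unfolding A_def by auto
      from measurable_component_singleton[OF this, of M'] show ?thesis unfolding M'_def by simp
    qed
    from iter_meas[OF gfm, where t=t and zf="\<lambda>s j f. f (s, j)" and N="PiM A M'" and P=P and eta=eta and alpha=alpha and ?w1.0=w1 and i=i, OF _ this]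
    show ?thesis unfolding \<Phi>_def by blast
  qed
  have \<Psi>m: "\<Psi> \<in> measurable (PiM B M') (D i)"
  proof -
    have "(t, i) \<in> B" unfolding B_def by simp
    from measurable_component_singleton[OF this, of M'] show ?thesis unfolding M'_def \<Psi>_def by simp
  qed
  define RA where "RA = (\<lambda>\<omega>. restrict (\<lambda>k. Xf k \<omega>) A)"
  define RB where "RB = (\<lambda>\<omega>. restrict (\<lambda>k. Xf k \<omega>) B)"
  have e1: "\<Phi> (RA \<omega>) = X \<omega>" for \<omega>
    unfolding \<Phi>_def X_def RA_def
    by (subst iter_dep[where z'="\<lambda>s j. Z s j \<omega>"]) (auto simp: A_def Xf_def)
  have e2: "\<Psi> (RB \<omega>) = Z t i \<omega>" for \<omega>
    unfolding \<Psi>_def RB_def B_def Xf_def by auto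
  have joint: "distr S (PiM A M') RA \<Otimes>\<^sub>M distr S (PiM B M') RB = distr S (PiM A M' \<Otimes>\<^sub>M PiM B M') (\<lambda>\<omega>. (RA \<omega>, RB \<omega>))"
    and RAm: "RA \<in> measurable S (PiM A M')" and RBm: "RB \<in> measurable S (PiM B M')"
    using ind1 unfolding S.indep_var_distribution_eq RA_def RB_def by auto
  have Zd: "distr S (D i) (Z t i) = D i" and Zm: "Z t i \<in> measurable S (D i)" using Z_distr t i by auto
  define H where "H = (\<lambda>p. ennreal ((norm (gf i (fst p) (snd p) - gF i (fst p)))\<^sup>2))"
  have Hm: "H \<in> borel_measurable (borel \<Otimes>\<^sub>M D i)"
  proof -
    have "(\<lambda>p. gf i (fst p) (snd p)) \<in> borel_measurable (borel \<Otimes>\<^sub>M D i)"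
      using gfm[OF i] by (simp add: case_prod_beta')
    moreover have "(\<lambda>p. gF i (fst p)) \<in> borel_measurable (borel \<Otimes>\<^sub>M D i)"
      using measurable_comp[OF measurable_fst gFm[OF i]] by (simp add: comp_def)
    ultimately have "(\<lambda>p. gf i (fst p) (snd p) - gF i (fst p)) \<in> borel_measurable (borel \<Otimes>\<^sub>M D i)"
      by (rule borel_measurable_diff)
    hence "(\<lambda>p. norm (gf i (fst p) (snd p) - gF i (fst p))) \<in> borel_measurable (borel \<Otimes>\<^sub>M D i)"
      by (rule measurable_compose[OF _ borel_measurable_norm])
    hence "(\<lambda>p. (norm (gf i (fst p) (snd p) - gF i (fst p)))\<^sup>2) \<in> borel_measurable (borel \<Otimes>\<^sub>M D i)"
      by (rule borel_measurable_power)
    thus ?thesis unfolding H_def by (rule measurable_compose[OF _ measurable_ennreal])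
  qed
  define G where "G = (\<lambda>p. H (\<Phi> (fst p), \<Psi> (snd p)))"
  have Gm: "G \<in> borel_measurable (PiM A M' \<Otimes>\<^sub>M PiM B M')"
  proof -
    have "(\<lambda>p. (\<Phi> (fst p), \<Psi> (snd p))) \<in> measurable (PiM A M' \<Otimes>\<^sub>M PiM B M') (borel \<Otimes>\<^sub>M D i)"
      using \<Phi>m \<Psi>m by (intro measurable_Pair measurable_compose[OF measurable_fst] measurable_compose[OF measurable_snd]) auto
    from measurable_comp[OF this Hm] show ?thesis unfolding G_def by (simp add: comp_def)
  qed
  interpret Di: prob_space "D i" using D_prob[OF i] .
  interpret DA: prob_space "distr S (PiM A M') RA" by (rule S.prob_space_distr[OF RAm])
  interpret DB: prob_space "distr S (PiM B M') RB" by (rule S.prob_space_distr[OF RBm])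
  have inner: "(\<integral>\<^sup>+ b. G (a, b) \<partial>distr S (PiM B M') RB) \<le> ennreal (sigma\<^sup>2)" for a
  proof -
    have Hm2: "(\<lambda>z. H (\<Phi> a, z)) \<in> borel_measurable (D i)"
      using measurable_comp[OF measurable_Pair[OF measurable_const[of "\<Phi> a"] measurable_ident_sets[OF refl]] Hm]
      by (simp add: comp_def)
    have "(\<integral>\<^sup>+ b. G (a, b) \<partial>distr S (PiM B M') RB) = (\<integral>\<^sup>+ \<omega>. G (a, RB \<omega>) \<partial>S)"
    proof (rule nn_integral_distr[OF RBm])
      have "(\<lambda>b. H (\<Phi> a, \<Psi> b)) \<in> borel_measurable (PiM B M')"
        using measurable_comp[OF \<Psi>m Hm2] by (simp add: comp_def)
      thus "(\<lambda>b. G (a, b)) \<in> borel_measurable (distr S (PiM B M') RB)" unfolding G_def by simp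
    qed
    also have "\<dots> = (\<integral>\<^sup>+ \<omega>. H (\<Phi> a, Z t i \<omega>) \<partial>S)" by (simp add: G_def e2)
    also have "\<dots> = (\<integral>\<^sup>+ z. H (\<Phi> a, z) \<partial>distr S (D i) (Z t i))"
      by (rule nn_integral_distr[symmetric, OF Zm]) (use Hm2 in simp)
    also have "\<dots> = (\<integral>\<^sup>+ z. H (\<Phi> a, z) \<partial>D i)" unfolding Zd ..
    also have "\<dots> \<le> ennreal (sigma\<^sup>2)" unfolding H_def using variance[OF i] by simp
    finally show ?thesis .
  qed
  have "(\<integral>\<^sup>+ \<omega>. H (X \<omega>, Z t i \<omega>) \<partial>S) = (\<integral>\<^sup>+ \<omega>. G (RA \<omega>, RB \<omega>) \<partial>S)"
    by (simp add: G_def e1 e2)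
  also have "\<dots> = (\<integral>\<^sup>+ p. G p \<partial>distr S (PiM A M' \<Otimes>\<^sub>M PiM B M') (\<lambda>\<omega>. (RA \<omega>, RB \<omega>)))"
    by (rule nn_integral_distr[symmetric]) (use RAm RBm Gm in auto)
  also have "\<dots> = (\<integral>\<^sup>+ p. G p \<partial>(distr S (PiM A M') RA \<Otimes>\<^sub>M distr S (PiM B M') RB))" unfolding joint ..
  also have "\<dots> = (\<integral>\<^sup>+ a. \<integral>\<^sup>+ b. G (a, b) \<partial>distr S (PiM B M') RB \<partial>distr S (PiM A M') RA)"
    by (rule DB.nn_integral_fst[symmetric]) (use Gm in simp)
  also have "\<dots> \<le> (\<integral>\<^sup>+ a. ennreal (sigma\<^sup>2) \<partial>distr S (PiM A M') RA)"
    by (rule nn_integral_mono) (rule inner)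
  also have "\<dots> = ennreal (sigma\<^sup>2)" using DA.emeasure_space_1 by simp
  finally show ?thesis unfolding H_def X_def by simp
qed



lemma sorted_abs:
  fixes k M :: nat and lam :: "nat \<Rightarrow> real"
  assumes "\<And>k. 1 \<le> k \<Longrightarrow> k + 1 < M \<Longrightarrow> \<bar>lam (k + 1)\<bar> \<le> \<bar>lam k\<bar>"
  shows "1 \<le> k \<Longrightarrow> k < M \<Longrightarrow> \<bar>lam k\<bar> \<le> \<bar>(lam 1)::real\<bar>"
proof (induction k)
  case 0 thus ?case by simp
next
  case (Suc k)
  show ?case
  proof (cases "k = 0")
    case True thus ?thesis by simp
  next
    case False
    hence "\<bar>lam k\<bar> \<le> \<bar>lam 1\<bar>" using Suc by simp
    moreover have "\<bar>lam (k + 1)\<bar> \<le> \<bar>lam k\<bar>" using assms[of k] False Suc.prems by simp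
    ultimately show ?thesis by simp
  qed
qed

lemma gossip_from_assms:
  fixes v :: "nat \<Rightarrow> 'x::euclidean_space" and lam :: "nat \<Rightarrow> real"
  assumes M1: "M \<ge> 1"
    and P_dim: "P \<in> carrier_mat M M"
    and P_sym: "transpose_mat P = P"
    and P_stoch: "\<And>i. i < M \<Longrightarrow> (\<Sum>j<M. P $$ (i, j)) = 1"
    and P_eigs: "char_poly P = (\<Prod>k<M. [:- lam k, 1:])"
    and lam_1: "lam 0 = 1"
    and lam_2: "\<bar>lam 1\<bar> < 1"
    and lam_sorted: "\<And>k. 1 \<le> k \<Longrightarrow> k + 1 < M \<Longrightarrow> \<bar>lam (k + 1)\<bar> \<le> \<bar>lam k\<bar>"
  shows "cd M (\<lambda>i. \<Sum>j<M. P $$ (i,j) *\<^sub>R v j) \<le> (\<bar>lam 1\<bar>)\<^sup>2 * cd M v"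
proof -
  have sym: "P $$ (i,j) = P $$ (j,i)" if "i < M" "j < M" for i j
  proof -
    have "P $$ (i,j) = transpose_mat P $$ (i,j)" using P_sym by simp
    also have "\<dots> = P $$ (j,i)" using that P_dim by simp
    finally show ?thesis .
  qed
  have cols: "(\<Sum>i<M. P $$ (i,j)) = 1" if "j < M" for j
    using P_stoch[OF that] sym that by (metis (no_types, lifting) lessThan_iff sum.cong)
  have sa: "\<bar>lam k\<bar> \<le> \<bar>lam 1\<bar>" if "1 \<le> k" "k < M" for k
    using sorted_abs[where lam=lam and M=M, OF lam_sorted] that by blast
  have lamne: "lam k \<noteq> 1" if "1 \<le> k" "k < M" for k
    using sa[OF that] lam_2 by auto
  have rows: "mv P M (\<lambda>_. 1) i = 1" if "i < M" for i
    unfolding mv_def using P_stoch[OF that] by simp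
  have Hev: "\<bar>\<beta>\<bar> \<le> \<bar>lam 1\<bar>"
    if i0: "i0 < M" "w i0 \<noteq> 0" and ev: "\<And>i. i < M \<Longrightarrow> mv P M w i = \<beta> * w i"
      and ws: "(\<Sum>i<M. w i) = 0" for \<beta> w i0
  proof -
    obtain k where k: "k < M" "\<beta> = lam k" using eig_root[OF P_dim P_eigs i0 ev] by blast
    show ?thesis
    proof (cases "k = 0")
      case True
      hence "\<beta> = 1" using k lam_1 by simp
      hence "\<And>i. i < M \<Longrightarrow> mv P M w i = w i" using ev by simp
      from mult1[OF P_dim P_eigs lamne rows ws this i0(1)] i0(2) show ?thesis by simp
    next
      case False thus ?thesis using sa[of k] k by simp
    qed
  qed
  have contr: "(\<Sum>i<M. (mv P M y i)\<^sup>2) \<le> (\<bar>lam 1\<bar>)\<^sup>2 * (\<Sum>i<M. (y i)\<^sup>2)" if "(\<Sum>j<M. y j) = 0" for y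
    by (rule rayleigh[OF sym cols Hev that]) auto
  show ?thesis by (rule cd_gossip[OF M1 P_stoch cols contr])
qed

lemma integ_comb:
  fixes f g1 g2 g3 :: "'w \<Rightarrow> real"
  assumes S: "prob_space S"
    and m: "g1 \<in> borel_measurable S" "g2 \<in> borel_measurable S" "g3 \<in> borel_measurable S"
    and c: "c1 \<ge> 0" "c2 \<ge> 0" "c3 \<ge> 0" "c4 \<ge> 0"
    and nn: "\<And>\<omega>. g1 \<omega> \<ge> 0" "\<And>\<omega>. g2 \<omega> \<ge> 0" "\<And>\<omega>. g3 \<omega> \<ge> 0"
    and b: "b1 \<ge> 0" "b2 \<ge> 0" "b3 \<ge> 0"
    and le: "\<And>\<omega>. f \<omega> \<le> c1 * g1 \<omega> + c2 * g2 \<omega> + c3 * g3 \<omega> + c4"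
    and i1: "(\<integral>\<^sup>+ \<omega>. ennreal (g1 \<omega>) \<partial>S) \<le> ennreal b1"
    and i2: "(\<integral>\<^sup>+ \<omega>. ennreal (g2 \<omega>) \<partial>S) \<le> ennreal b2"
    and i3: "(\<integral>\<^sup>+ \<omega>. ennreal (g3 \<omega>) \<partial>S) \<le> ennreal b3"
  shows "(\<integral>\<^sup>+ \<omega>. ennreal (f \<omega>) \<partial>S) \<le> ennreal (c1 * b1 + c2 * b2 + c3 * b3 + c4)"
proof -
  interpret prob_space S by (rule S)
  have em: "(\<lambda>\<omega>. ennreal (g1 \<omega>)) \<in> borel_measurable S" "(\<lambda>\<omega>. ennreal (g2 \<omega>)) \<in> borel_measurable S"
    "(\<lambda>\<omega>. ennreal (g3 \<omega>)) \<in> borel_measurable S" using m by auto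
  have "(\<integral>\<^sup>+ \<omega>. ennreal (f \<omega>) \<partial>S) \<le>
      (\<integral>\<^sup>+ \<omega>. ennreal c1 * ennreal (g1 \<omega>) + ennreal c2 * ennreal (g2 \<omega>) + ennreal c3 * ennreal (g3 \<omega>) + ennreal c4 \<partial>S)"
  proof (rule nn_integral_mono)
    fix \<omega>
    have "ennreal (f \<omega>) \<le> ennreal (c1 * g1 \<omega> + c2 * g2 \<omega> + c3 * g3 \<omega> + c4)"
      by (rule ennreal_leI[OF le])
    also have "\<dots> = ennreal c1 * ennreal (g1 \<omega>) + ennreal c2 * ennreal (g2 \<omega>) + ennreal c3 * ennreal (g3 \<omega>) + ennreal c4"
      using c nn[of \<omega>] by (simp add: ennreal_plus[symmetric] ennreal_mult[symmetric] del: ennreal_plus)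
    finally show "ennreal (f \<omega>) \<le> \<dots>" .
  qed
  also have "\<dots> = ennreal c1 * (\<integral>\<^sup>+ \<omega>. ennreal (g1 \<omega>) \<partial>S) + ennreal c2 * (\<integral>\<^sup>+ \<omega>. ennreal (g2 \<omega>) \<partial>S)
      + ennreal c3 * (\<integral>\<^sup>+ \<omega>. ennreal (g3 \<omega>) \<partial>S) + ennreal c4"
    using em by (simp add: nn_integral_add nn_integral_cmult emeasure_space_1)
  also have "\<dots> \<le> ennreal c1 * ennreal b1 + ennreal c2 * ennreal b2 + ennreal c3 * ennreal b3 + ennreal c4"
    by (intro add_mono mult_left_mono i1 i2 i3) auto
  also have "\<dots> = ennreal (c1 * b1 + c2 * b2 + c3 * b3 + c4)"
    using c b by (simp add: ennreal_plus[symmetric] ennreal_mult[symmetric] del: ennreal_plus)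
  finally show ?thesis .
qed

lemma key_L:
  fixes L e r :: real
  assumes L: "L > 0" and e: "e > 0" and r: "r > 0" and le: "e \<le> r\<^sup>2 / (8 * sqrt 80 * L)"
  shows "L\<^sup>2 * e\<^sup>2 \<le> r ^ 4 / 5120"
proof -
  have "e * L \<le> r\<^sup>2 / (8 * sqrt 80)" using le L by (simp add: field_simps)
  moreover have "0 \<le> e * L" using e L by simp
  ultimately have "(e * L)\<^sup>2 \<le> (r\<^sup>2 / (8 * sqrt 80))\<^sup>2" by (intro power_mono)
  also have "\<dots> = r ^ 4 / 5120" by (simp add: power_divide power_mult_distrib)
  finally show ?thesis by (simp add: power_mult_distrib mult.commute)
qed

lemma arithW:
  fixes L e r K sig zet A B Mr tr :: real
  assumes r: "0 < r" "r \<le> 1" and KL: "L\<^sup>2 * e\<^sup>2 \<le> r ^ 4 / 5120"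
    and K: "K = 2 * sig\<^sup>2 + zet\<^sup>2" and A: "A = 27 * K / r\<^sup>2" and B: "B = 2560 * K / r ^ 4"
    and Mr: "Mr \<ge> 1" and tr: "tr \<ge> 1"
  shows "(1 - r/2) * (Mr * A * e\<^sup>2 * tr\<^sup>2) + ((3/r) * e\<^sup>2 * tr\<^sup>2 * 3) * (Mr * sig\<^sup>2)
       + ((3/r) * e\<^sup>2 * tr\<^sup>2 * 3 * L\<^sup>2) * (Mr * B * e\<^sup>2) + (3/r) * e\<^sup>2 * tr\<^sup>2 * (3 * Mr * zet\<^sup>2)
       \<le> Mr * A * e\<^sup>2 * (tr + 1)\<^sup>2"
proof -
  have K0: "K \<ge> 0" using K by simp
  have hB: "B * (L\<^sup>2 * e\<^sup>2) \<le> K / 2"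
  proof -
    have "B * (L\<^sup>2 * e\<^sup>2) \<le> B * (r ^ 4 / 5120)" using KL B K0 r by (intro mult_left_mono) auto
    also have "\<dots> = K / 2" using B r by (simp add: field_simps)
    finally show ?thesis .
  qed
  define Q where "Q = Mr * e\<^sup>2 * tr\<^sup>2"
  have Q0: "Q \<ge> 0" unfolding Q_def using Mr by simp
  have br: "(1 - r/2) * A + (9/r) * (sig\<^sup>2 + B * (L\<^sup>2 * e\<^sup>2) + zet\<^sup>2) \<le> A"
  proof -
    have "sig\<^sup>2 + B * (L\<^sup>2 * e\<^sup>2) + zet\<^sup>2 \<le> 3 * K / 2" using hB K zero_le_power2[of sig] by linarith
    hence "(9/r) * (sig\<^sup>2 + B * (L\<^sup>2 * e\<^sup>2) + zet\<^sup>2) \<le> (9/r) * (3 * K / 2)"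
      using r by (intro mult_left_mono) auto
    also have "\<dots> = (r/2) * A" using A r by (simp add: field_simps power2_eq_square)
    finally show ?thesis by (simp add: algebra_simps)
  qed
  have "(1 - r/2) * (Mr * A * e\<^sup>2 * tr\<^sup>2) + ((3/r) * e\<^sup>2 * tr\<^sup>2 * 3) * (Mr * sig\<^sup>2)
       + ((3/r) * e\<^sup>2 * tr\<^sup>2 * 3 * L\<^sup>2) * (Mr * B * e\<^sup>2) + (3/r) * e\<^sup>2 * tr\<^sup>2 * (3 * Mr * zet\<^sup>2)
       = Q * ((1 - r/2) * A + (9/r) * (sig\<^sup>2 + B * (L\<^sup>2 * e\<^sup>2) + zet\<^sup>2))"
    unfolding Q_def by (simp add: algebra_simps)
  also have "\<dots> \<le> Q * A" by (rule mult_left_mono[OF br Q0])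
  also have "\<dots> \<le> Mr * A * e\<^sup>2 * (tr + 1)\<^sup>2"
  proof -
    have A0: "A \<ge> 0" using A K0 r by simp
    have "tr\<^sup>2 \<le> (tr + 1)\<^sup>2" using tr by (intro power_mono) auto
    hence "Mr * e\<^sup>2 * A * tr\<^sup>2 \<le> Mr * e\<^sup>2 * A * (tr + 1)\<^sup>2" using Mr A0 by (intro mult_left_mono) auto
    thus ?thesis unfolding Q_def by (simp add: algebra_simps)
  qed
  finally show ?thesis .
qed

lemma arithX:
  fixes L e r K sig zet A B Mr tr d :: real
  assumes r: "0 < r" "r \<le> 1" and KL: "L\<^sup>2 * e\<^sup>2 \<le> r ^ 4 / 5120"
    and K: "K = 2 * sig\<^sup>2 + zet\<^sup>2" and A: "A = 27 * K / r\<^sup>2" and B: "B = 2560 * K / r ^ 4"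
    and Mr: "Mr \<ge> 1" and d: "d\<^sup>2 * tr\<^sup>2 \<le> 4"
  shows "((3/r) * d\<^sup>2 * (1 + r/2)) * (Mr * A * e\<^sup>2 * tr\<^sup>2) + ((3/r) * d\<^sup>2 * ((3/r) * e\<^sup>2 * tr\<^sup>2 * 3)) * (Mr * sig\<^sup>2)
       + ((1 - r/2) + (3/r) * d\<^sup>2 * ((3/r) * e\<^sup>2 * tr\<^sup>2 * 3 * L\<^sup>2)) * (Mr * B * e\<^sup>2)
       + (3/r) * d\<^sup>2 * ((3/r) * e\<^sup>2 * tr\<^sup>2 * (3 * Mr * zet\<^sup>2))
       \<le> Mr * B * e\<^sup>2"
proof -
  have K0: "K \<ge> 0" using K by simp
  have hB: "B * (L\<^sup>2 * e\<^sup>2) \<le> K / 2"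
  proof -
    have "B * (L\<^sup>2 * e\<^sup>2) \<le> B * (r ^ 4 / 5120)" using KL B K0 r by (intro mult_left_mono) auto
    also have "\<dots> = K / 2" using B r by (simp add: field_simps)
    finally show ?thesis .
  qed
  define E where "E = d\<^sup>2 * tr\<^sup>2"
  have E0: "E \<ge> 0" "E \<le> 4" unfolding E_def using d by auto
  define br where "br = (3/r) * (1 + r/2) * A + (27/r\<^sup>2) * (sig\<^sup>2 + B * (L\<^sup>2 * e\<^sup>2) + zet\<^sup>2)"
  have br_le: "br \<le> 162 * K / r ^ 3"
  proof -
    have s: "sig\<^sup>2 + B * (L\<^sup>2 * e\<^sup>2) + zet\<^sup>2 \<le> 3 * K / 2" using hB K zero_le_power2[of sig] by linarith
    have t1: "(3/r) * (1 + r/2) * A \<le> (9 / (2 * r)) * A"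
    proof -
      have A0: "A \<ge> 0" using A K0 r by simp
      have "(3/r) * (1 + r/2) \<le> 9 / (2 * r)" using r by (simp add: field_simps)
      thus ?thesis using A0 by (intro mult_right_mono) auto
    qed
    have t2: "(27/r\<^sup>2) * (sig\<^sup>2 + B * (L\<^sup>2 * e\<^sup>2) + zet\<^sup>2) \<le> (27/r\<^sup>2) * (3 * K / 2)"
      using s r by (intro mult_left_mono) auto
    have t3: "(27/r\<^sup>2) * (3 * K / 2) \<le> 81 * K / (2 * r ^ 3)"
    proof -
      have "1 / r\<^sup>2 \<le> 1 / r ^ 3"
        using r by (intro divide_left_mono) (auto simp: power3_eq_cube power2_eq_square mult_left_le_one_le)
      hence "(81 * K / 2) * (1 / r\<^sup>2) \<le> (81 * K / 2) * (1 / r ^ 3)" using K0 by (intro mult_left_mono) auto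
      thus ?thesis by (simp add: field_simps)
    qed
    have "(9 / (2 * r)) * A = 243 * K / (2 * r ^ 3)" using A r by (simp add: field_simps power2_eq_square power3_eq_cube)
    hence "br \<le> 243 * K / (2 * r ^ 3) + 81 * K / (2 * r ^ 3)" unfolding br_def using t1 t2 t3 by linarith
    also have "\<dots> = 162 * K / r ^ 3" by (simp add: field_simps)
    finally show ?thesis .
  qed
  have "((3/r) * d\<^sup>2 * (1 + r/2)) * (Mr * A * e\<^sup>2 * tr\<^sup>2) + ((3/r) * d\<^sup>2 * ((3/r) * e\<^sup>2 * tr\<^sup>2 * 3)) * (Mr * sig\<^sup>2)
       + ((1 - r/2) + (3/r) * d\<^sup>2 * ((3/r) * e\<^sup>2 * tr\<^sup>2 * 3 * L\<^sup>2)) * (Mr * B * e\<^sup>2)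
       + (3/r) * d\<^sup>2 * ((3/r) * e\<^sup>2 * tr\<^sup>2 * (3 * Mr * zet\<^sup>2))
     = (1 - r/2) * (Mr * B * e\<^sup>2) + Mr * e\<^sup>2 * E * br"
    unfolding E_def br_def using r by (simp add: field_simps power2_eq_square)
  also have "\<dots> \<le> (1 - r/2) * (Mr * B * e\<^sup>2) + Mr * e\<^sup>2 * (4 * (162 * K / r ^ 3))"
  proof -
    have br0: "br \<ge> 0" unfolding br_def using A B K0 r by (auto intro!: add_nonneg_nonneg mult_nonneg_nonneg)
    have "E * br \<le> 4 * (162 * K / r ^ 3)" using E0 br_le br0 by (intro mult_mono) auto
    hence "(Mr * e\<^sup>2) * (E * br) \<le> (Mr * e\<^sup>2) * (4 * (162 * K / r ^ 3))"
      by (rule mult_left_mono) (use Mr in simp)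
    moreover have "Mr * e\<^sup>2 * E * br = (Mr * e\<^sup>2) * (E * br)" by (simp add: mult.assoc)
    ultimately show ?thesis by simp
  qed
  also have "\<dots> \<le> Mr * B * e\<^sup>2"
  proof -
    have "4 * (162 * K / r ^ 3) \<le> (r/2) * B" using B r K0 by (simp add: field_simps power_def)
    hence "Mr * e\<^sup>2 * (4 * (162 * K / r ^ 3)) \<le> Mr * e\<^sup>2 * ((r/2) * B)" using Mr by (intro mult_left_mono) auto
    thus ?thesis by (simp add: algebra_simps)
  qed
  finally show ?thesis .
qed



lemma lin_X:
  fixes a b n r q d e tt L Mr z :: real
  shows "(1 - r/2) * b + q * d * ((1 + r/2) * a + q * e * tt * (3 * n + 3 * L * b + 3 * Mr * z))
    = (q * d * (1 + r/2)) * a + (q * d * (q * e * tt * 3)) * n + ((1 - r/2) + q * d * (q * e * tt * 3 * L)) * b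
      + q * d * (q * e * tt * (3 * Mr * z))"
  by (simp add: algebra_simps)

theorem mainTheorem7:
  fixes M :: nat and L sigma zeta eta rho :: real
    and D :: "nat \<Rightarrow> 'z measure"
    and fz :: "nat \<Rightarrow> 'x::euclidean_space \<Rightarrow> 'z \<Rightarrow> real"
    and gf :: "nat \<Rightarrow> 'x \<Rightarrow> 'z \<Rightarrow> 'x"
    and F :: "nat \<Rightarrow> 'x \<Rightarrow> real"
    and gF :: "nat \<Rightarrow> 'x \<Rightarrow> 'x"
    and P :: "real mat" and lam :: "nat \<Rightarrow> real"
    and S :: "'w measure" and Z :: "nat \<Rightarrow> nat \<Rightarrow> 'w \<Rightarrow> 'z"
    and w1 :: 'x and t :: nat
  assumes M_pos: "M \<ge> 1"
    (* distributions and stochastic functions *)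
    and D_prob: "\<And>i. i < M \<Longrightarrow> prob_space (D i)"
    and fz_deriv: "\<And>i x z. i < M \<Longrightarrow> z \<in> space (D i) \<Longrightarrow>
        ((\<lambda>y. fz i y z) has_derivative (\<lambda>h. gf i x z \<bullet> h)) (at x)"
    and gf_meas: "\<And>i. i < M \<Longrightarrow> (\<lambda>(x, z). gf i x z) \<in> borel_measurable (borel \<Otimes>\<^sub>M D i)"
    and F_def: "\<And>i x. i < M \<Longrightarrow> integrable (D i) (fz i x) \<and> F i x = (\<integral>z. fz i x z \<partial>D i)"
    and F_deriv: "\<And>i x. i < M \<Longrightarrow> (F i has_derivative (\<lambda>h. gF i x \<bullet> h)) (at x)"
    and unbiased: "\<And>i x. i < M \<Longrightarrow> integrable (D i) (gf i x) \<and> (\<integral>z. gf i x z \<partial>D i) = gF i x"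
    (* standing assumptions *)
    and L_pos: "L > 0"
    and smooth: "\<And>i x y. i < M \<Longrightarrow> norm (gF i x - gF i y) \<le> L * norm (x - y)"
    and variance: "\<And>i x. i < M \<Longrightarrow>
        (\<integral>\<^sup>+ z. ennreal ((norm (gf i x z - gF i x))\<^sup>2) \<partial>D i) \<le> ennreal (sigma\<^sup>2)"
    and heterogeneity: "\<And>x. (1 / real M) *
        (\<Sum>i<M. (norm (gF i x - (1 / real M) *\<^sub>R (\<Sum>j<M. gF j x)))\<^sup>2) \<le> zeta\<^sup>2"
    (* gossip matrix *)
    and P_dim: "P \<in> carrier_mat M M"
    and P_entries: "\<And>i j. i < M \<Longrightarrow> j < M \<Longrightarrow> 0 \<le> P $$ (i, j) \<and> P $$ (i, j) \<le> 1"
    and P_sym: "transpose_mat P = P"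
    and P_stoch: "\<And>i. i < M \<Longrightarrow> (\<Sum>j<M. P $$ (i, j)) = 1"
    and P_eigs: "char_poly P = (\<Prod>k<M. [:- lam k, 1:])"
    and lam_1: "lam 0 = 1"
    and lam_2: "\<bar>lam 1\<bar> < 1"
    and lam_sorted: "\<And>k. 1 \<le> k \<Longrightarrow> k + 1 < M \<Longrightarrow> \<bar>lam (k + 1)\<bar> \<le> \<bar>lam k\<bar>"
    and rho_def: "rho = 1 - \<bar>lam 1\<bar>"
    (* randomness: z_t^i ~ D_i, all independent *)
    and S_prob: "prob_space S"
    and Z_distr: "\<And>s i. s \<ge> 1 \<Longrightarrow> i < M \<Longrightarrow>
        Z s i \<in> measurable S (D i) \<and> distr S (D i) (Z s i) = D i"
    and Z_indep: "prob_space.indep_vars S (\<lambda>(s, i). D i) (\<lambda>(s, i). Z s i) ({1..} \<times> {..<M})"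
    (* step size *)
    and eta_pos: "0 < eta"
    and eta_le: "eta \<le> rho\<^sup>2 / (8 * sqrt 80 * L)"
    and t_ge: "t \<ge> 1"
  shows "consensus_x S M P gf eta (\<lambda>s. real s) w1 Z t
           \<le> ennreal (2560 * (2 * sigma\<^sup>2 + zeta\<^sup>2) * eta\<^sup>2 / rho ^ 4)"
proof -
  have L0: "L \<ge> 0" using L_pos by simp
  have rho0: "0 < rho" and rho1: "rho \<le> 1" using rho_def lam_2 by auto
  have gos: "cd M (\<lambda>i. \<Sum>j<M. P $$ (i,j) *\<^sub>R v j) \<le> (1 - rho)\<^sup>2 * cd M v" for v :: "nat \<Rightarrow> 'x"
  proof -
    have "1 - rho = \<bar>lam 1\<bar>" using rho_def by simp
    thus ?thesis using gossip_from_assms[OF M_pos P_dim P_sym P_stoch P_eigs lam_1 lam_2 lam_sorted, of v] by simp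
  qed
  have gFm: "gF i \<in> borel_measurable borel" if i: "i < M" for i
  proof -
    have "L-lipschitz_on UNIV (gF i)"
      by (rule lipschitz_onI) (use smooth[OF i] L0 in \<open>auto simp: dist_norm\<close>)
    hence "continuous_on UNIV (gF i)" by (rule lipschitz_on_continuous_on)
    thus ?thesis by (rule borel_measurable_continuous_onI)
  qed
  interpret S: prob_space S by (rule S_prob)
  define W where "W = (\<lambda>t \<omega>. fst (dat_iter M P gf eta (\<lambda>s. real s) w1 (\<lambda>s j. Z s j \<omega>) t))"
  define X where "X = (\<lambda>t \<omega>. snd (dat_iter M P gf eta (\<lambda>s. real s) w1 (\<lambda>s j. Z s j \<omega>) t))"
  define K where "K = 2 * sigma\<^sup>2 + zeta\<^sup>2"
  define A where "A = 27 * K / rho\<^sup>2"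
  define B where "B = 2560 * K / rho ^ 4"
  have K0: "K \<ge> 0" unfolding K_def by simp
  have A0: "A \<ge> 0" and B0: "B \<ge> 0" unfolding A_def B_def using K0 by auto
  have KL: "L\<^sup>2 * eta\<^sup>2 \<le> rho ^ 4 / 5120" by (rule key_L[OF L_pos eta_pos rho0 eta_le])
  have Zm: "Z s j \<in> measurable S (D j)" if "1 \<le> s" "j < M" for s j using Z_distr that by auto
  have WXm0: "(\<lambda>\<omega>. W t \<omega> i) \<in> borel_measurable S \<and> (\<lambda>\<omega>. X t \<omega> i) \<in> borel_measurable S" for t i
    unfolding W_def X_def
    by (rule iter_meas[where M=M and gf=gf and D=D and zf=Z and N=S]) (use gf_meas Zm in auto)
  have WXm: "(\<lambda>\<omega>. W t \<omega> i) \<in> borel_measurable S" "(\<lambda>\<omega>. X t \<omega> i) \<in> borel_measurable S" for t i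
    using WXm0[of t i] by auto
  have cdWm: "(\<lambda>\<omega>. cd M (W t \<omega>)) \<in> borel_measurable S" for t by (rule cd_meas) (rule WXm)
  have cdXm: "(\<lambda>\<omega>. cd M (X t \<omega>)) \<in> borel_measurable S" for t by (rule cd_meas) (rule WXm)
  define Nz where "Nz = (\<lambda>t \<omega>. \<Sum>i<M. (norm (gf i (X t \<omega> i) (Z t i \<omega>) - gF i (X t \<omega> i)))\<^sup>2)"
  have Nzi_m: "(\<lambda>\<omega>. (norm (gf i (X t \<omega> i) (Z t i \<omega>) - gF i (X t \<omega> i)))\<^sup>2) \<in> borel_measurable S"
    if t: "t \<ge> 1" and i: "i < M" for t i
  proof -
    have "(\<lambda>\<omega>. (X t \<omega> i, Z t i \<omega>)) \<in> measurable S (borel \<Otimes>\<^sub>M D i)"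
      using WXm(2)[of t i] Zm[OF t i] by (auto intro!: measurable_Pair)
    from measurable_comp[OF this gf_meas[OF i]]
    have g: "(\<lambda>\<omega>. gf i (X t \<omega> i) (Z t i \<omega>)) \<in> borel_measurable S" by (simp add: comp_def)
    have h: "(\<lambda>\<omega>. gF i (X t \<omega> i)) \<in> borel_measurable S"
      using measurable_comp[OF WXm(2)[of t i] gFm[OF i]] by (simp add: comp_def)
    have "(\<lambda>\<omega>. gf i (X t \<omega> i) (Z t i \<omega>) - gF i (X t \<omega> i)) \<in> borel_measurable S"
      using g h by (rule borel_measurable_diff)
    hence "(\<lambda>\<omega>. norm (gf i (X t \<omega> i) (Z t i \<omega>) - gF i (X t \<omega> i))) \<in> borel_measurable S"
      by (rule measurable_compose[OF _ borel_measurable_norm])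
    thus ?thesis by (rule borel_measurable_power)
  qed
  have Nzm: "(\<lambda>\<omega>. Nz t \<omega>) \<in> borel_measurable S" if "t \<ge> 1" for t
    unfolding Nz_def using Nzi_m[OF that] by (auto intro!: borel_measurable_sum)
  have Nz0: "Nz t \<omega> \<ge> 0" for t \<omega> unfolding Nz_def by (simp add: sum_nonneg)
  have Nz_int: "(\<integral>\<^sup>+ \<omega>. ennreal (Nz t \<omega>) \<partial>S) \<le> ennreal (real M * sigma\<^sup>2)" if t: "t \<ge> 1" for t
  proof -
    have "(\<integral>\<^sup>+ \<omega>. ennreal (Nz t \<omega>) \<partial>S)
        = (\<integral>\<^sup>+ \<omega>. (\<Sum>i<M. ennreal ((norm (gf i (X t \<omega> i) (Z t i \<omega>) - gF i (X t \<omega> i)))\<^sup>2)) \<partial>S)"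
      unfolding Nz_def by (simp add: sum_ennreal)
    also have "\<dots> = (\<Sum>i<M. \<integral>\<^sup>+ \<omega>. ennreal ((norm (gf i (X t \<omega> i) (Z t i \<omega>) - gF i (X t \<omega> i)))\<^sup>2) \<partial>S)"
      by (rule nn_integral_sum) (use Nzi_m[OF t] in auto)
    also have "\<dots> \<le> (\<Sum>i<M. ennreal (sigma\<^sup>2))"
    proof (rule sum_mono)
      fix i assume "i \<in> {..<M}"
      hence i: "i < M" by simp
      show "(\<integral>\<^sup>+ \<omega>. ennreal ((norm (gf i (X t \<omega> i) (Z t i \<omega>) - gF i (X t \<omega> i)))\<^sup>2) \<partial>S) \<le> ennreal (sigma\<^sup>2)"
        unfolding X_def
        by (rule noise_bound[OF S_prob D_prob gf_meas gFm variance Z_distr Z_indep t i])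
    qed
    also have "\<dots> = ennreal (real M * sigma\<^sup>2)" by (simp add: ennreal_mult ennreal_of_nat_eq_real_of_nat)
    finally show ?thesis .
  qed
  have main: "(\<integral>\<^sup>+ \<omega>. ennreal (cd M (W n \<omega>)) \<partial>S) \<le> ennreal (real M * A * eta\<^sup>2 * (real n)\<^sup>2) \<and>
              (\<integral>\<^sup>+ \<omega>. ennreal (cd M (X n \<omega>)) \<partial>S) \<le> ennreal (real M * B * eta\<^sup>2)" if n: "n \<ge> 1" for n
    using n
  proof (induction n rule: nat_induct_at_least)
    case base
    have "W 1 \<omega> = (\<lambda>i. w1)" "X 1 \<omega> = (\<lambda>i. w1)" for \<omega> unfolding W_def X_def by simp_all
    hence "cd M (W 1 \<omega>) = 0" "cd M (X 1 \<omega>) = 0" for \<omega> unfolding cd_def avgv_def using M_pos by (simp_all add: sum_constant_scaleR)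
    thus ?case by simp
  next
    case (Suc t)
    have t: "t \<ge> 1" by fact
    note IH = Suc.IH
    define \<delta> where "\<delta> = real t / (\<Sum>s=1..t. real s)"
    have st: "dat_step M P gf eta (\<lambda>s. real s) t (\<lambda>j. Z t j \<omega>) (W t \<omega>, X t \<omega>) = (W (Suc t) \<omega>, X (Suc t) \<omega>)" for \<omega>
      using t unfolding W_def X_def by simp
    note sb = step_bounds[OF M_pos rho0 rho1 gos smooth L0 heterogeneity t st]
    have d4: "\<delta>\<^sup>2 * (real t)\<^sup>2 \<le> 4" unfolding \<delta>_def using delta_bounds[OF t] by simp
    have c1: "(3/rho) * \<delta>\<^sup>2 * (1 + rho/2) \<ge> 0" using rho0 by simp
    have Wb: "(\<integral>\<^sup>+ \<omega>. ennreal (cd M (W (Suc t) \<omega>)) \<partial>S) \<le> ennreal (real M * A * eta\<^sup>2 * (real (Suc t))\<^sup>2)"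
    proof -
      have "(\<integral>\<^sup>+ \<omega>. ennreal (cd M (W (Suc t) \<omega>)) \<partial>S) \<le>
        ennreal ((1 - rho/2) * (real M * A * eta\<^sup>2 * (real t)\<^sup>2) + ((3/rho) * eta\<^sup>2 * (real t)\<^sup>2 * 3) * (real M * sigma\<^sup>2)
          + ((3/rho) * eta\<^sup>2 * (real t)\<^sup>2 * 3 * L\<^sup>2) * (real M * B * eta\<^sup>2) + (3/rho) * eta\<^sup>2 * (real t)\<^sup>2 * (3 * real M * zeta\<^sup>2))"
      proof (rule integ_comb[OF S_prob cdWm Nzm[OF t] cdXm])
        show "0 \<le> 1 - rho/2" using rho1 by simp
        show "0 \<le> (3/rho) * eta\<^sup>2 * (real t)\<^sup>2 * 3" using rho0 by simp
        show "0 \<le> (3/rho) * eta\<^sup>2 * (real t)\<^sup>2 * 3 * L\<^sup>2" using rho0 by simp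
        show "0 \<le> (3/rho) * eta\<^sup>2 * (real t)\<^sup>2 * (3 * real M * zeta\<^sup>2)" using rho0 by simp
        show "cd M (W t \<omega>) \<ge> 0" "Nz t \<omega> \<ge> 0" "cd M (X t \<omega>) \<ge> 0" for \<omega> by (simp_all add: cd_nonneg Nz0)
        show "0 \<le> real M * A * eta\<^sup>2 * (real t)\<^sup>2" "0 \<le> real M * sigma\<^sup>2" "0 \<le> real M * B * eta\<^sup>2"
          using A0 B0 by simp_all
        show "cd M (W (Suc t) \<omega>) \<le> (1 - rho/2) * cd M (W t \<omega>) + ((3/rho) * eta\<^sup>2 * (real t)\<^sup>2 * 3) * Nz t \<omega>
            + ((3/rho) * eta\<^sup>2 * (real t)\<^sup>2 * 3 * L\<^sup>2) * cd M (X t \<omega>) + (3/rho) * eta\<^sup>2 * (real t)\<^sup>2 * (3 * real M * zeta\<^sup>2)" for \<omega>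
          using sb(1)[of \<omega>] unfolding Nz_def by (simp add: algebra_simps)
        show "(\<integral>\<^sup>+ \<omega>. ennreal (cd M (W t \<omega>)) \<partial>S) \<le> ennreal (real M * A * eta\<^sup>2 * (real t)\<^sup>2)" using IH by simp
        show "(\<integral>\<^sup>+ \<omega>. ennreal (Nz t \<omega>) \<partial>S) \<le> ennreal (real M * sigma\<^sup>2)" by (rule Nz_int[OF t])
        show "(\<integral>\<^sup>+ \<omega>. ennreal (cd M (X t \<omega>)) \<partial>S) \<le> ennreal (real M * B * eta\<^sup>2)" using IH by simp
      qed
      also have "\<dots> \<le> ennreal (real M * A * eta\<^sup>2 * (real t + 1)\<^sup>2)"
        by (rule ennreal_leI, rule arithW[OF rho0 rho1 KL K_def A_def B_def]) (use M_pos t in auto)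
      also have "real t + 1 = real (Suc t)" by simp
      finally show ?thesis .
    qed
    have Xb: "(\<integral>\<^sup>+ \<omega>. ennreal (cd M (X (Suc t) \<omega>)) \<partial>S) \<le> ennreal (real M * B * eta\<^sup>2)"
    proof -
      have "(\<integral>\<^sup>+ \<omega>. ennreal (cd M (X (Suc t) \<omega>)) \<partial>S) \<le>
        ennreal (((3/rho) * \<delta>\<^sup>2 * (1 + rho/2)) * (real M * A * eta\<^sup>2 * (real t)\<^sup>2) + ((3/rho) * \<delta>\<^sup>2 * ((3/rho) * eta\<^sup>2 * (real t)\<^sup>2 * 3)) * (real M * sigma\<^sup>2)
          + ((1 - rho/2) + (3/rho) * \<delta>\<^sup>2 * ((3/rho) * eta\<^sup>2 * (real t)\<^sup>2 * 3 * L\<^sup>2)) * (real M * B * eta\<^sup>2)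
          + (3/rho) * \<delta>\<^sup>2 * ((3/rho) * eta\<^sup>2 * (real t)\<^sup>2 * (3 * real M * zeta\<^sup>2)))"
      proof (rule integ_comb[OF S_prob cdWm Nzm[OF t] cdXm])
        show "0 \<le> (3/rho) * \<delta>\<^sup>2 * (1 + rho/2)" using rho0 by simp
        show "0 \<le> (3/rho) * \<delta>\<^sup>2 * ((3/rho) * eta\<^sup>2 * (real t)\<^sup>2 * 3)" using rho0 by simp
        show "0 \<le> (1 - rho/2) + (3/rho) * \<delta>\<^sup>2 * ((3/rho) * eta\<^sup>2 * (real t)\<^sup>2 * 3 * L\<^sup>2)" using rho0 rho1 by simp
        show "0 \<le> (3/rho) * \<delta>\<^sup>2 * ((3/rho) * eta\<^sup>2 * (real t)\<^sup>2 * (3 * real M * zeta\<^sup>2))" using rho0 by simp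
        show "cd M (W t \<omega>) \<ge> 0" "Nz t \<omega> \<ge> 0" "cd M (X t \<omega>) \<ge> 0" for \<omega> by (simp_all add: cd_nonneg Nz0)
        show "0 \<le> real M * A * eta\<^sup>2 * (real t)\<^sup>2" "0 \<le> real M * sigma\<^sup>2" "0 \<le> real M * B * eta\<^sup>2"
          using A0 B0 by simp_all
        show "cd M (X (Suc t) \<omega>) \<le> ((3/rho) * \<delta>\<^sup>2 * (1 + rho/2)) * cd M (W t \<omega>) + ((3/rho) * \<delta>\<^sup>2 * ((3/rho) * eta\<^sup>2 * (real t)\<^sup>2 * 3)) * Nz t \<omega>
            + ((1 - rho/2) + (3/rho) * \<delta>\<^sup>2 * ((3/rho) * eta\<^sup>2 * (real t)\<^sup>2 * 3 * L\<^sup>2)) * cd M (X t \<omega>)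
            + (3/rho) * \<delta>\<^sup>2 * ((3/rho) * eta\<^sup>2 * (real t)\<^sup>2 * (3 * real M * zeta\<^sup>2))" for \<omega>
        proof -
          note sb(2)[of \<omega>]
          also have "(1 - rho / 2) * cd M (X t \<omega>) + 3 / rho * (real t / (\<Sum>s = 1..t. real s))\<^sup>2 *
              ((1 + rho / 2) * cd M (W t \<omega>) + 3 / rho * eta\<^sup>2 * (real t)\<^sup>2 *
               (3 * (\<Sum>i<M. (norm (gf i (X t \<omega> i) (Z t i \<omega>) - gF i (X t \<omega> i)))\<^sup>2) + 3 * L\<^sup>2 * cd M (X t \<omega>) +
                3 * real M * zeta\<^sup>2)) = ((3/rho) * \<delta>\<^sup>2 * (1 + rho/2)) * cd M (W t \<omega>) + ((3/rho) * \<delta>\<^sup>2 * ((3/rho) * eta\<^sup>2 * (real t)\<^sup>2 * 3)) * Nz t \<omega>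
            + ((1 - rho/2) + (3/rho) * \<delta>\<^sup>2 * ((3/rho) * eta\<^sup>2 * (real t)\<^sup>2 * 3 * L\<^sup>2)) * cd M (X t \<omega>)
            + (3/rho) * \<delta>\<^sup>2 * ((3/rho) * eta\<^sup>2 * (real t)\<^sup>2 * (3 * real M * zeta\<^sup>2))"
            unfolding Nz_def \<delta>_def by (rule lin_X)
          finally show ?thesis .
        qed
        show "(\<integral>\<^sup>+ \<omega>. ennreal (cd M (W t \<omega>)) \<partial>S) \<le> ennreal (real M * A * eta\<^sup>2 * (real t)\<^sup>2)" using IH by simp
        show "(\<integral>\<^sup>+ \<omega>. ennreal (Nz t \<omega>) \<partial>S) \<le> ennreal (real M * sigma\<^sup>2)" by (rule Nz_int[OF t])
        show "(\<integral>\<^sup>+ \<omega>. ennreal (cd M (X t \<omega>)) \<partial>S) \<le> ennreal (real M * B * eta\<^sup>2)" using IH by simp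
      qed
      also have "\<dots> \<le> ennreal (real M * B * eta\<^sup>2)"
        by (rule ennreal_leI, rule arithX[OF rho0 rho1 KL K_def A_def B_def _ d4]) (use M_pos in auto)
      finally show ?thesis .
    qed
    show ?case using Wb Xb by simp
  qed
  have "consensus_x S M P gf eta (\<lambda>s. real s) w1 Z t = (\<integral>\<^sup>+ \<omega>. ennreal (1 / real M) * ennreal (cd M (X t \<omega>)) \<partial>S)"
    unfolding consensus_x_def X_def cd_def avgv_def
    by (rule nn_integral_cong) (simp add: ennreal_mult[symmetric] sum_nonneg)
  also have "\<dots> = ennreal (1 / real M) * (\<integral>\<^sup>+ \<omega>. ennreal (cd M (X t \<omega>)) \<partial>S)"
    using cdXm by (simp add: nn_integral_cmult)
  also have "\<dots> \<le> ennreal (1 / real M) * ennreal (real M * B * eta\<^sup>2)"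
    using main[OF t_ge] by (intro mult_left_mono) auto
  also have "\<dots> = ennreal (2560 * (2 * sigma\<^sup>2 + zeta\<^sup>2) * eta\<^sup>2 / rho ^ 4)"
    using M_pos B0 by (simp add: ennreal_mult[symmetric] B_def K_def)
  finally show ?thesis .
qed


end
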